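(* Let $\{(\mathscr A,\kappa),(\mathrm a,\alpha),(\tilde{\mathrm a},\tilde\alpha)\}$ be a covariant structure. For $x,y\in{\sf G}$, $\xi,\eta\in\tilde{\sf G}$ set $$\overrightarrow{\mathrm a}_{(x,\xi)}:=\tilde{\mathrm a}_\xi\circ\mathrm a_x,\qquad \overrightarrow{\alpha}\big((x,\xi),(y,\eta)\big):=\tilde{\mathrm a}_\xi[\kappa(x,\eta)]\,\tilde\alpha(\xi,\eta)\,\tilde{\mathrm a}_{\xi\eta}[\alpha(x,y)].$$ Then $(\overrightarrow{\mathrm a},\overrightarrow{\alpha})$ is a measurable twisted action of the product group ${\sf G}\times\tilde{\sf G}$ on $\mathscr A$. If $(\mathrm a,\alpha)$ and $(\tilde{\mathrm a},\tilde\alpha)$ are continuous, then $(\overrightarrow{\mathrm a},\overrightarrow{\alpha})$ is continuous.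
   Context: ${\sf G}$ and $\tilde{\sf G}$ are second countable locally compact groups with units ${\sf e}$ and $\varepsilon$. $\mathscr A$ is a separable C*-algebra with multiplier algebra $\mathcal M(\mathscr A)$ and unitary group $\mathcal{UM}(\mathscr A)$; automorphisms extend to $\mathcal M(\mathscr A)$, and $\mathrm{ad}_m(A):=mAm^*$. A twisted action of a locally compact group $K$ (unit $e_K$) on $\mathscr A$ is a pair $(\mathrm a,\alpha)$ with $\mathrm a:K\to\mathrm{Aut}(\mathscr A)$, $\alpha:K\times K\to\mathcal{UM}(\mathscr A)$ such that $\mathrm a_{e_K}=\mathrm{id}$, $\mathrm a_x\circ\mathrm a_y=\mathrm{ad}_{\alpha(x,y)}\circ\mathrm a_{xy}$, $\alpha(x,e_K)=1=\alpha(e_K,x)$ and $\alpha(x,y)\alpha(xy,z)=\mathrm a_x[\alpha(y,z)]\alpha(x,yz)$. It is measurable if $\mathrm a$ is strongly measurable and $\alpha$ strictly measurable; continuous if $\mathrm a$ is strongly continuous and $\alpha$ strictly continuous. A covariant structure $\{(\mathscr A,\kappa),(\mathrm a,\alpha),(\tilde{\mathrm a},\tilde\alpha)\}$ consists of measurable twisted actions $(\mathrm a,\alpha)$ of ${\sf G}$ and $(\tilde{\mathrm a},\tilde\alpha)$ of $\tilde{\sf G}$ on $\mathscr A$ and a strictly continuous $\kappa:{\sf G}\times\tilde{\sf G}\to\mathcal{UM}(\mathscr A)$ with $\kappa({\sf e},\xi)=1=\kappa(x,\varepsilon)$, such that for all $x,y\in{\sf G}$, $\xi,\eta\in\tilde{\sf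 G}$: (C1) $\mathrm a_x\circ\tilde{\mathrm a}_\xi=\mathrm{ad}_{\kappa(x,\xi)}\circ\tilde{\mathrm a}_\xi\circ\mathrm a_x$; (C2) $\mathrm a_x[\tilde\alpha(\xi,\eta)]=\kappa(x,\xi)\,\tilde{\mathrm a}_\xi[\kappa(x,\eta)]\,\tilde\alpha(\xi,\eta)\,\kappa(x,\xi\eta)^*$; (C3) $\tilde{\mathrm a}_\xi[\alpha(x,y)]=\kappa(x,\xi)^*\,\mathrm a_x[\kappa(y,\xi)^*]\,\alpha(x,y)\,\kappa(xy,\xi)$. *)

theory Defs
  imports "HOL-Analysis.Analysis"
begin

section \<open>Separable C*-algebras (complex, not necessarily unital)\<close>

text \<open>Separability is second countability of the norm topology.\<close>

class cstar_algebra = real_normed_algebra + banach + second_countable_topology +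
  fixes cscale :: "complex \<Rightarrow> 'a \<Rightarrow> 'a"
    and cstar :: "'a \<Rightarrow> 'a"
  assumes cscale_of_real: "cscale (complex_of_real r) x = r *\<^sub>R x"
    and cscale_mult: "cscale (c * d) x = cscale c (cscale d x)"
    and cscale_add_left: "cscale (c + d) x = cscale c x + cscale d x"
    and cscale_add_right: "cscale c (x + y) = cscale c x + cscale c y"
    and norm_cscale: "norm (cscale c x) = cmod c * norm x"
    and cscale_mult_left: "cscale c (x * y) = cscale c x * y"
    and cscale_mult_right: "cscale c (x * y) = x * cscale c y"
    and cstar_cstar: "cstar (cstar x) = x"
    and cstar_add: "cstar (x + y) = cstar x + cstar y"
    and cstar_cscale: "cstar (cscale c x) = cscale (cnj c) (cstar x)"
    and cstar_mult: "cstar (x * y) = cstar y * cstar x"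
    and cstar_identity: "norm (cstar x * x) = (norm x)\<^sup>2"

section \<open>The multiplier algebra, realised as double centralizers (L,R)\<close>

type_synonym 'a multiplier = "('a \<Rightarrow> 'a) \<times> ('a \<Rightarrow> 'a)"

definition is_multiplier :: "'a::cstar_algebra multiplier \<Rightarrow> bool" where
  "is_multiplier m \<longleftrightarrow> (\<forall>x y. x * fst m y = snd m x * y)"

definition mmult :: "'a::cstar_algebra multiplier \<Rightarrow> 'a multiplier \<Rightarrow> 'a multiplier" where
  "mmult m n = (fst m \<circ> fst n, snd n \<circ> snd m)"

definition mstar :: "'a::cstar_algebra multiplier \<Rightarrow> 'a multiplier" where
  "mstar m = (cstar \<circ> snd m \<circ> cstar, cstar \<circ> fst m \<circ> cstar)"

definition mone :: "'a::cstar_algebra multiplier" where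
  "mone = (id, id)"

definition unitary_mult :: "'a::cstar_algebra multiplier \<Rightarrow> bool" where
  "unitary_mult m \<longleftrightarrow> is_multiplier m \<and> mmult m (mstar m) = mone \<and> mmult (mstar m) m = mone"

definition is_aut :: "('a::cstar_algebra \<Rightarrow> 'a) \<Rightarrow> bool" where
  "is_aut f \<longleftrightarrow> bij f \<and> (\<forall>x y. f (x + y) = f x + f y) \<and> (\<forall>c x. f (cscale c x) = cscale c (f x))
     \<and> (\<forall>x y. f (x * y) = f x * f y) \<and> (\<forall>x. f (cstar x) = cstar (f x))"

definition aut_ext :: "('a::cstar_algebra \<Rightarrow> 'a) \<Rightarrow> 'a multiplier \<Rightarrow> 'a multiplier" where
  "aut_ext f m = (f \<circ> fst m \<circ> inv f, f \<circ> snd m \<circ> inv f)"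

text \<open>ad_m (A) = m A m^* \<close>
definition ad :: "'a::cstar_algebra multiplier \<Rightarrow> 'a \<Rightarrow> 'a" where
  "ad m = fst m \<circ> snd (mstar m)"

section \<open>Second countable locally compact (Hausdorff) groups, written additively\<close>

class lcsc_group = topological_group_add + second_countable_topology + t2_space +
  assumes locally_compact: "\<And>x::'a. \<exists>U K. open U \<and> compact K \<and> x \<in> U \<and> U \<subseteq> K"

definition twisted_action ::
  "('k::group_add \<Rightarrow> 'a::cstar_algebra \<Rightarrow> 'a) \<Rightarrow> ('k \<Rightarrow> 'k \<Rightarrow> 'a multiplier) \<Rightarrow> bool" where
  "twisted_action a \<alpha> \<longleftrightarrow>
     (\<forall>x. is_aut (a x)) \<and> (\<forall>x y. unitary_mult (\<alpha> x y)) \<and>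
     a 0 = id \<and>
     (\<forall>x y. a x \<circ> a y = ad (\<alpha> x y) \<circ> a (x + y)) \<and>
     (\<forall>x. \<alpha> x 0 = mone \<and> \<alpha> 0 x = mone) \<and>
     (\<forall>x y z. mmult (\<alpha> x y) (\<alpha> (x + y) z) = mmult (aut_ext (a x) (\<alpha> y z)) (\<alpha> x (y + z)))"

text \<open>Strong measurability/continuity of a map into Aut(A): pointwise in A (norm topology).
 Strict measurability/continuity of a map into M(A): m \<mapsto> m A and m \<mapsto> A m, pointwise in A.\<close>

definition strongly_measurable :: "('k::topological_space \<Rightarrow> 'a::cstar_algebra \<Rightarrow> 'a) \<Rightarrow> bool" where
  "strongly_measurable a \<longleftrightarrow> (\<forall>A. (\<lambda>x. a x A) \<in> borel_measurable borel)"

definition strictly_measurable :: "('t::topological_space \<Rightarrow> 'a::cstar_algebra multiplier) \<Rightarrow> bool" where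
  "strictly_measurable m \<longleftrightarrow>
     (\<forall>A. (\<lambda>t. fst (m t) A) \<in> borel_measurable borel \<and> (\<lambda>t. snd (m t) A) \<in> borel_measurable borel)"

definition strongly_continuous :: "('k::topological_space \<Rightarrow> 'a::cstar_algebra \<Rightarrow> 'a) \<Rightarrow> bool" where
  "strongly_continuous a \<longleftrightarrow> (\<forall>A. continuous_on UNIV (\<lambda>x. a x A))"

definition strictly_continuous :: "('t::topological_space \<Rightarrow> 'a::cstar_algebra multiplier) \<Rightarrow> bool" where
  "strictly_continuous m \<longleftrightarrow>
     (\<forall>A. continuous_on UNIV (\<lambda>t. fst (m t) A) \<and> continuous_on UNIV (\<lambda>t. snd (m t) A))"

definition measurable_twisted_action ::
  "('k::{group_add,topological_space} \<Rightarrow> 'a::cstar_algebra \<Rightarrow> 'a) \<Rightarrow> ('k \<Rightarrow> 'k \<Rightarrow> 'a multiplier) \<Rightarrow> bool" where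
  "measurable_twisted_action a \<alpha> \<longleftrightarrow>
     twisted_action a \<alpha> \<and> strongly_measurable a \<and> strictly_measurable (\<lambda>(x, y). \<alpha> x y)"

definition continuous_twisted_action ::
  "('k::{group_add,topological_space} \<Rightarrow> 'a::cstar_algebra \<Rightarrow> 'a) \<Rightarrow> ('k \<Rightarrow> 'k \<Rightarrow> 'a multiplier) \<Rightarrow> bool" where
  "continuous_twisted_action a \<alpha> \<longleftrightarrow>
     twisted_action a \<alpha> \<and> strongly_continuous a \<and> strictly_continuous (\<lambda>(x, y). \<alpha> x y)"

definition covariant_structure ::
  "('g::lcsc_group \<Rightarrow> 'a::cstar_algebra \<Rightarrow> 'a) \<Rightarrow> ('g \<Rightarrow> 'g \<Rightarrow> 'a multiplier) \<Rightarrow>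
   ('h::lcsc_group \<Rightarrow> 'a \<Rightarrow> 'a) \<Rightarrow> ('h \<Rightarrow> 'h \<Rightarrow> 'a multiplier) \<Rightarrow>
   ('g \<Rightarrow> 'h \<Rightarrow> 'a multiplier) \<Rightarrow> bool" where
  "covariant_structure a \<alpha> ta \<alpha>t \<kappa> \<longleftrightarrow>
     measurable_twisted_action a \<alpha> \<and> measurable_twisted_action ta \<alpha>t \<and>
     (\<forall>x \<xi>. unitary_mult (\<kappa> x \<xi>)) \<and> strictly_continuous (\<lambda>(x, \<xi>). \<kappa> x \<xi>) \<and>
     (\<forall>\<xi>. \<kappa> 0 \<xi> = mone) \<and> (\<forall>x. \<kappa> x 0 = mone) \<and>
     (\<forall>x \<xi>. a x \<circ> ta \<xi> = ad (\<kappa> x \<xi>) \<circ> ta \<xi> \<circ> a x) \<and>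
     (\<forall>x \<xi> \<eta>. aut_ext (a x) (\<alpha>t \<xi> \<eta>) =
        mmult (mmult (mmult (\<kappa> x \<xi>) (aut_ext (ta \<xi>) (\<kappa> x \<eta>))) (\<alpha>t \<xi> \<eta>)) (mstar (\<kappa> x (\<xi> + \<eta>)))) \<and>
     (\<forall>x y \<xi>. aut_ext (ta \<xi>) (\<alpha> x y) =
        mmult (mmult (mmult (mstar (\<kappa> x \<xi>)) (aut_ext (a x) (mstar (\<kappa> y \<xi>)))) (\<alpha> x y)) (\<kappa> (x + y) \<xi>))"

definition prod_act ::
  "('g \<Rightarrow> 'a::cstar_algebra \<Rightarrow> 'a) \<Rightarrow> ('h \<Rightarrow> 'a \<Rightarrow> 'a) \<Rightarrow> 'g \<times> 'h \<Rightarrow> 'a \<Rightarrow> 'a" where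
  "prod_act a ta p = ta (snd p) \<circ> a (fst p)"

definition prod_cocycle ::
  "('g::plus \<Rightarrow> 'g \<Rightarrow> 'a::cstar_algebra multiplier) \<Rightarrow> ('h::plus \<Rightarrow> 'a \<Rightarrow> 'a) \<Rightarrow> ('h \<Rightarrow> 'h \<Rightarrow> 'a multiplier) \<Rightarrow>
   ('g \<Rightarrow> 'h \<Rightarrow> 'a multiplier) \<Rightarrow> 'g \<times> 'h \<Rightarrow> 'g \<times> 'h \<Rightarrow> 'a multiplier" where
  "prod_cocycle \<alpha> ta \<alpha>t \<kappa> p q =
     mmult (mmult (aut_ext (ta (snd p)) (\<kappa> (fst p) (snd q))) (\<alpha>t (snd p) (snd q)))
           (aut_ext (ta (snd p + snd q)) (\<alpha> (fst p) (fst q)))"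

end

theory Submission
  imports Defs
begin

lemma cscale_zero_left[simp]: "cscale 0 (x::'a::cstar_algebra) = 0"
  using cscale_of_real[of 0 x] by simp

lemma cscale_one[simp]: "cscale 1 (x::'a::cstar_algebra) = x"
  using cscale_of_real[of 1 x] by simp

lemma cscale_zero_right[simp]: "cscale c (0::'a::cstar_algebra) = 0"
  using cscale_add_right[of c 0 0] by simp

lemma cscale_minus_left: "cscale (- c) (x::'a::cstar_algebra) = - cscale c x"
  using cscale_add_left[of c "-c" x] by (simp add: eq_neg_iff_add_eq_0 add.commute)

lemma cscale_minus_right: "cscale c (- x::'a::cstar_algebra) = - cscale c x"
  using cscale_add_right[of c x "-x"] by (simp add: eq_neg_iff_add_eq_0 add.commute)

lemma cscale_diff_left: "cscale (c - d) (x::'a::cstar_algebra) = cscale c x - cscale d x"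
  using cscale_add_left[of c "-d" x] by (simp add: cscale_minus_left)

lemma cscale_diff_right: "cscale c (x - y::'a::cstar_algebra) = cscale c x - cscale c y"
  using cscale_add_right[of c x "-y"] by (simp add: cscale_minus_right)

lemma scaleR_cscale: "r *\<^sub>R (x::'a::cstar_algebra) = cscale (complex_of_real r) x"
  by (simp add: cscale_of_real)

lemma cscale_sum_left: "cscale (\<Sum>i\<in>I. c i) (x::'a::cstar_algebra) = (\<Sum>i\<in>I. cscale (c i) x)"
  by (induct I rule: infinite_finite_induct) (auto simp: cscale_add_left)

lemma cscale_sum_right: "cscale c (\<Sum>i\<in>I. x i) = (\<Sum>i\<in>I. cscale c (x i::'a::cstar_algebra))"
  by (induct I rule: infinite_finite_induct) (auto simp: cscale_add_right)

lemma cscale_mult_both: "cscale c x * cscale d y = cscale (c * d) (x * (y::'a::cstar_algebra))"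
  by (simp add: cscale_mult_left[symmetric] cscale_mult_right[symmetric] cscale_mult[symmetric] mult.commute)

lemma cstar_zero[simp]: "cstar (0::'a::cstar_algebra) = 0"
  using cstar_add[of 0 0] by simp

lemma cstar_minus: "cstar (- x::'a::cstar_algebra) = - cstar x"
  using cstar_add[of x "-x"] by (simp add: eq_neg_iff_add_eq_0 add.commute)

lemma cstar_diff: "cstar (x - y::'a::cstar_algebra) = cstar x - cstar y"
  using cstar_add[of x "-y"] by (simp add: cstar_minus)

lemma cstar_scaleR: "cstar (r *\<^sub>R x::'a::cstar_algebra) = r *\<^sub>R cstar x"
  by (simp add: scaleR_cscale cstar_cscale)

lemma cstar_inj: "cstar x = cstar y \<longleftrightarrow> x = (y::'a::cstar_algebra)"
  by (metis cstar_cstar)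

lemma norm_cstar_le: "norm (cstar x) \<le> norm (x::'a::cstar_algebra)"
proof -
  have "(norm (cstar x))\<^sup>2 = norm (cstar (cstar x) * cstar x)" by (rule cstar_identity[symmetric])
  also have "\<dots> = norm (x * cstar x)" by (simp add: cstar_cstar)
  also have "\<dots> \<le> norm x * norm (cstar x)" by (rule norm_mult_ineq)
  finally have "norm (cstar x) * norm (cstar x) \<le> norm x * norm (cstar x)" by (simp add: power2_eq_square)
  then show ?thesis
    by (metis mult_right_le_imp_le norm_ge_zero order_le_less)
qed

lemma norm_cstar[simp]: "norm (cstar x) = norm (x::'a::cstar_algebra)"
  by (metis antisym norm_cstar_le cstar_cstar)

lemma norm_cscale_real: "norm (cscale (complex_of_real r) x) = \<bar>r\<bar> * norm (x::'a::cstar_algebra)"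
  by (simp add: norm_cscale)

section \<open>Quasi-inverses\<close>

definition qp :: "'a::cstar_algebra \<Rightarrow> 'a \<Rightarrow> 'a" where
  "qp x y = x + y - x * y"

definition qinv :: "'a::cstar_algebra \<Rightarrow> 'a \<Rightarrow> bool" where
  "qinv y q \<longleftrightarrow> qp y q = 0 \<and> qp q y = 0"

lemma qp_assoc: "qp (qp x y) z = qp x (qp y z)"
  by (simp add: qp_def algebra_simps)

lemma qp_0_left[simp]: "qp 0 x = x" and qp_0_right[simp]: "qp x 0 = x"
  by (simp_all add: qp_def)

lemma qinv_unique: "qinv y q \<Longrightarrow> qinv y q' \<Longrightarrow> q = q'"
proof -
  assume a: "qinv y q" "qinv y q'"
  have "q = qp q (qp y q')" using a(2) by (simp add: qinv_def)
  also have "\<dots> = qp (qp q y) q'" by (simp add: qp_assoc)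
  also have "\<dots> = q'" using a(1) by (simp add: qinv_def)
  finally show ?thesis .
qed

lemma qinv_qp: "qinv a qa \<Longrightarrow> qinv b qb \<Longrightarrow> qinv (qp a b) (qp qb qa)"
proof -
  assume a: "qinv a qa" "qinv b qb"
  have "qp (qp a b) (qp qb qa) = qp a (qp (qp b qb) qa)" by (simp add: qp_assoc)
  also have "\<dots> = 0" using a by (simp add: qinv_def)
  finally have 1: "qp (qp a b) (qp qb qa) = 0" .
  have "qp (qp qb qa) (qp a b) = qp qb (qp (qp qa a) b)" by (simp add: qp_assoc)
  also have "\<dots> = 0" using a by (simp add: qinv_def)
  finally show ?thesis using 1 by (simp add: qinv_def)
qed

fun kp :: "'a::cstar_algebra \<Rightarrow> nat \<Rightarrow> 'a" where
  "kp x 0 = x"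
| "kp x (Suc n) = x * kp x n"

lemma kp_comm: "kp x n * x = x * kp x n"
  by (induct n) (simp_all add: mult.assoc)

lemma kp_Suc': "kp x (Suc n) = kp x n * x"
  by (simp add: kp_comm)

lemma kp_add: "kp x (Suc (m + n)) = kp x m * kp x n"
  by (induct m) (simp_all add: mult.assoc)

lemma norm_kp: "norm (kp x n) \<le> norm x ^ Suc n"
proof (induct n)
  case 0 then show ?case by simp
next
  case (Suc n)
  have "norm (kp x (Suc n)) \<le> norm x * norm (kp x n)" by (simp add: norm_mult_ineq)
  also have "\<dots> \<le> norm x * norm x ^ Suc n" by (rule mult_left_mono[OF Suc]) simp
  finally show ?case by simp
qed

lemma kp_cscale: "kp (cscale c x) n = cscale (c ^ Suc n) (kp x n)"
  by (induct n) (simp_all add: cscale_mult_both)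

lemma kp_scaleR: "kp (r *\<^sub>R x) n = (r ^ Suc n) *\<^sub>R (kp x n)"
  by (induct n) (simp_all add: mult.assoc)

lemma cstar_kp: "cstar x = x \<Longrightarrow> cstar (kp x n) = kp x n"
  by (induct n) (simp_all add: cstar_mult kp_comm)

lemma neumann:
  fixes y :: "'a::cstar_algebra"
  assumes y: "norm y < 1"
  shows "\<exists>q. qinv y q \<and> norm q \<le> norm y / (1 - norm y)"
proof -
  have sg: "summable (\<lambda>n. norm y ^ Suc n)" using y by (simp add: summable_geometric)
  have s: "summable (\<lambda>n. kp y n)"
    by (rule summable_comparison_test[OF _ sg]) (use norm_kp[of y] in auto)
  have sn: "summable (\<lambda>n. norm (kp y n))"
    by (rule summable_comparison_test[OF _ sg]) (use norm_kp[of y] in auto)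
  define S where "S = (\<Sum>n. kp y n)"
  have 1: "y * S = S - y"
  proof -
    have "y * S = (\<Sum>n. y * kp y n)" unfolding S_def by (rule suminf_mult[OF s, symmetric])
    also have "\<dots> = (\<Sum>n. kp y (Suc n))" by simp
    also have "\<dots> = S - y" unfolding S_def using suminf_split_head[OF s] by simp
    finally show ?thesis .
  qed
  have 2: "S * y = S - y"
  proof -
    have "S * y = (\<Sum>n. kp y n * y)" unfolding S_def by (rule suminf_mult2[OF s])
    also have "\<dots> = (\<Sum>n. kp y (Suc n))" by (simp add: kp_comm)
    also have "\<dots> = S - y" unfolding S_def using suminf_split_head[OF s] by simp
    finally show ?thesis .
  qed
  have "qinv y (- S)" unfolding qinv_def qp_def using 1 2 by (simp add: algebra_simps)
  moreover have "norm (- S) \<le> norm y / (1 - norm y)"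
  proof -
    have "norm S \<le> (\<Sum>n. norm (kp y n))" unfolding S_def by (rule summable_norm[OF sn])
    also have "\<dots> \<le> (\<Sum>n. norm y ^ Suc n)" by (rule suminf_le[OF _ sn sg]) (use norm_kp[of y] in simp)
    also have "\<dots> = norm y * (\<Sum>n. norm y ^ n)"
      using suminf_mult[OF summable_geometric[of "norm y"], of "norm y"] y by simp
    also have "\<dots> = norm y / (1 - norm y)"
      using suminf_geometric[of "norm y"] y by simp
    finally show ?thesis by simp
  qed
  ultimately show ?thesis by blast
qed

lemma qinv_bound:
  assumes "qinv y q" "norm y < 1"
  shows "norm q \<le> norm y / (1 - norm y)"
  using neumann[OF assms(2)] qinv_unique[OF assms(1)] by blast

lemma qinv_perturb:
  fixes y0 q0 y :: "'a::cstar_algebra"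
  assumes q0: "qinv y0 q0" and small: "norm (y - y0) * (1 + norm q0) < 1"
  shows "\<exists>q. qinv y q \<and> norm (q - q0) \<le> (1 + norm q0) * (norm (y - y0) * (1 + norm q0)
             / (1 - norm (y - y0) * (1 + norm q0)))"
proof -
  define d where "d = y - y0"
  define e where "e = d - q0 * d"
  have ne: "norm e \<le> norm d * (1 + norm q0)"
  proof -
    have "norm e \<le> norm d + norm (q0 * d)" unfolding e_def by (rule norm_triangle_ineq4)
    also have "\<dots> \<le> norm d + norm q0 * norm d" by (simp add: norm_mult_ineq)
    finally show ?thesis by (simp add: algebra_simps)
  qed
  have e1: "norm e < 1" using ne small unfolding d_def by linarith
  obtain qe where qe: "qinv e qe" "norm qe \<le> norm e / (1 - norm e)" using neumann[OF e1] by blast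
  have yeq: "y = qp y0 e"
  proof -
    have "qp y0 e = y0 + d - (q0 + y0 - y0 * q0) * d" unfolding qp_def e_def by (simp add: algebra_simps)
    also have "q0 + y0 - y0 * q0 = 0" using q0 unfolding qinv_def qp_def by (simp add: algebra_simps)
    finally show ?thesis unfolding d_def by simp
  qed
  have "qinv y (qp qe q0)" using qinv_qp[OF q0 qe(1)] yeq by simp
  moreover have "norm (qp qe q0 - q0) \<le> (1 + norm q0) * (norm d * (1 + norm q0) / (1 - norm d * (1 + norm q0)))"
  proof -
    have "qp qe q0 - q0 = qe - qe * q0" by (simp add: qp_def)
    then have "norm (qp qe q0 - q0) \<le> norm qe + norm (qe * q0)"
      by (simp add: norm_triangle_ineq4)
    also have "\<dots> \<le> norm qe + norm qe * norm q0" by (simp add: norm_mult_ineq)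
    also have "\<dots> = (1 + norm q0) * norm qe" by (simp add: algebra_simps)
    also have "\<dots> \<le> (1 + norm q0) * (norm e / (1 - norm e))"
      by (rule mult_left_mono[OF qe(2)]) simp
    also have "norm e / (1 - norm e) \<le> norm d * (1 + norm q0) / (1 - norm d * (1 + norm q0))"
    proof (rule frac_le)
      show "0 \<le> norm d * (1 + norm q0)" by simp
      show "norm e \<le> norm d * (1 + norm q0)" by (rule ne)
      show "0 < 1 - norm d * (1 + norm q0)" using small d_def by simp
      show "1 - norm d * (1 + norm q0) \<le> 1 - norm e" using ne by simp
    qed
    then have "(1 + norm q0) * (norm e / (1 - norm e)) \<le> (1 + norm q0) * (norm d * (1 + norm q0) / (1 - norm d * (1 + norm q0)))"
      by (rule mult_left_mono) simp
    finally show ?thesis .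
  qed
  ultimately have "qinv y (qp qe q0) \<and> norm (qp qe q0 - q0) \<le> (1 + norm q0) * (norm d * (1 + norm q0) / (1 - norm d * (1 + norm q0)))"
    by (rule conjI)
  then show ?thesis unfolding d_def by (rule exI)
qed


lemma qp_neg_P: "qp y (- (\<Sum>m<n. kp y m)) = kp y n \<and> qp (- (\<Sum>m<n. kp y m)) y = kp y n"
proof (induct n)
  case 0 then show ?case by (simp add: qp_def)
next
  case (Suc n)
  have c: "y * (\<Sum>m<n. kp y m) = (\<Sum>m<n. kp y m) * y"
    by (simp add: sum_distrib_left sum_distrib_right kp_comm)
  have "qp y (- (\<Sum>m<Suc n. kp y m)) = qp y (- (\<Sum>m<n. kp y m)) - kp y n + y * kp y n"
    by (simp add: qp_def algebra_simps)
  also have "\<dots> = kp y (Suc n)" using Suc by simp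
  finally have 1: "qp y (- (\<Sum>m<Suc n. kp y m)) = kp y (Suc n)" .
  have "qp (- (\<Sum>m<Suc n. kp y m)) y = qp y (- (\<Sum>m<Suc n. kp y m))"
    using c by (simp add: qp_def algebra_simps kp_comm)
  then show ?case using 1 by simp
qed

definition omega :: "nat \<Rightarrow> complex" where
  "omega n = exp (\<i> * complex_of_real (2 * pi / real (Suc n)))"

lemma norm_omega_pow[simp]: "cmod (omega n ^ j) = 1"
  by (simp add: omega_def norm_power)

lemma omega_pow_Suc: "omega n ^ Suc n = 1"
proof -
  have "omega n ^ Suc n = exp (of_nat (Suc n) * (\<i> * complex_of_real (2 * pi / real (Suc n))))"
    unfolding omega_def by (rule exp_of_nat_mult[symmetric])
  also have "of_nat (Suc n) * (\<i> * complex_of_real (2 * pi / real (Suc n))) = (2 * 1 * pi) * \<i>"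
  proof -
    have nz: "1 + (of_nat n::complex) \<noteq> 0"
      by (metis of_nat_Suc of_nat_eq_0_iff nat.distinct(1) add.commute)
    show ?thesis using nz by (simp add: field_simps)
  qed
  also have "exp \<dots> = 1" by (rule exp_integer_2pi) simp
  finally show ?thesis .
qed

lemma omega_roots_sum:
  assumes m: "m < n"
  shows "(\<Sum>j<Suc n. (omega n ^ Suc m) ^ j) = 0"
proof -
  define w where "w = omega n ^ Suc m"
  have wN: "w ^ Suc n = 1" unfolding w_def
    by (metis omega_pow_Suc power_mult power_mult_distrib mult.commute power_one)
  have w1: "w \<noteq> 1"
  proof
    assume "w = 1"
    then have "exp (of_nat (Suc m) * (\<i> * complex_of_real (2 * pi / real (Suc n)))) = 1"
      unfolding w_def omega_def by (simp only: exp_of_nat_mult)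
    then obtain i :: int where i: "Im (of_nat (Suc m) * (\<i> * complex_of_real (2 * pi / real (Suc n)))) = of_int (2 * i) * pi"
      unfolding exp_eq_1 by blast
    then have "real (Suc m) * (2 * pi / real (Suc n)) = 2 * real_of_int i * pi" by simp
    then have h: "real (Suc m) * (2 * pi / real (Suc n)) = 2 * real_of_int i * pi" by simp
    have "real (Suc m) = (real (Suc m) * (2 * pi / real (Suc n))) * real (Suc n) / (2 * pi)"
      by (simp del: of_nat_Suc)
    also have "\<dots> = real_of_int i * real (Suc n)" unfolding h by (simp del: of_nat_Suc)
    finally have "real (Suc m) = real_of_int i * real (Suc n)" .
    then have e: "int (Suc m) = i * int (Suc n)" by (metis of_int_eq_iff of_int_mult of_int_of_nat_eq)
    have "0 < i" using e by (smt (verit) mult_nonpos_nonneg of_nat_0_le_iff of_nat_Suc)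
    then have "int (Suc n) \<le> i * int (Suc n)" by simp
    then show False using e m by linarith
  qed
  have "(\<Sum>j<Suc n. w ^ j) = 0" using sum_gp_strict[of w "Suc n"] w1 wN by simp
  then show ?thesis unfolding w_def .
qed

lemma root_avg:
  fixes k :: "'a::cstar_algebra"
  assumes q: "\<And>j. j < Suc n \<Longrightarrow> qinv (cscale (c * omega n ^ j) k) (q j)"
  shows "qinv (cscale (c ^ Suc n) (kp k n)) ((1 / real (Suc n)) *\<^sub>R (\<Sum>j<Suc n. q j))"
proof -
  define Y where "Y = cscale (c ^ Suc n) (kp k n)"
  define y where "y j = cscale (c * omega n ^ j) k" for j
  define P where "P j = (\<Sum>m<n. kp (y j) m)" for j
  have Yj: "kp (y j) n = Y" for j
  proof -
    have "(omega n ^ j) ^ Suc n = (omega n ^ Suc n) ^ j"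
      by (metis power_mult mult.commute)
    then have "(c * omega n ^ j) ^ Suc n = c ^ Suc n"
      by (simp only: power_mult_distrib omega_pow_Suc power_one mult_1_right)
    then show ?thesis unfolding y_def Y_def by (simp only: kp_cscale)
  qed
  have PP: "- P j = qp (q j) Y \<and> - P j = qp Y (q j)" if j: "j < Suc n" for j
  proof -
    have a: "qp (y j) (- P j) = Y" "qp (- P j) (y j) = Y" using qp_neg_P[of "y j" n] Yj unfolding P_def by auto
    have qj: "qinv (y j) (q j)" using q[OF j] unfolding y_def .
    have "qp (q j) Y = qp (qp (q j) (y j)) (- P j)" using a(1) by (simp add: qp_assoc)
    also have "\<dots> = - P j" using qj by (simp add: qinv_def)
    finally have 1: "- P j = qp (q j) Y" by simp
    have "qp Y (q j) = qp (- P j) (qp (y j) (q j))" by (simp add: qp_assoc a(2)[symmetric])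
    also have "\<dots> = - P j" using qj by (simp add: qinv_def)
    finally show ?thesis using 1 by simp
  qed
  have sumP: "(\<Sum>j<Suc n. P j) = 0"
  proof -
    have "(\<Sum>j<Suc n. P j) = (\<Sum>j<Suc n. \<Sum>m<n. cscale ((c * omega n ^ j) ^ Suc m) (kp k m))"
      unfolding P_def y_def by (simp add: kp_cscale)
    also have "\<dots> = (\<Sum>m<n. \<Sum>j<Suc n. cscale ((c * omega n ^ j) ^ Suc m) (kp k m))"
      by (rule sum.swap)
    also have "\<dots> = (\<Sum>m<n. cscale (\<Sum>j<Suc n. (c * omega n ^ j) ^ Suc m) (kp k m))"
      by (simp only: cscale_sum_left)
    also have "\<dots> = (\<Sum>m<n. cscale (c ^ Suc m * (\<Sum>j<Suc n. (omega n ^ Suc m) ^ j)) (kp k m))"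
    proof -
      have pw: "(c * omega n ^ j) ^ Suc m = c ^ Suc m * (omega n ^ Suc m) ^ j" for j m
        by (simp only: power_mult_distrib) (metis power_mult mult.commute)
      show ?thesis by (simp only: pw sum_distrib_left)
    qed
    also have "\<dots> = 0"
    proof (rule sum.neutral, rule ballI)
      fix m assume "m \<in> {..<n}"
      then have "(\<Sum>j<Suc n. (omega n ^ Suc m) ^ j) = 0" by (intro omega_roots_sum) simp
      then show "cscale (c ^ Suc m * (\<Sum>j<Suc n. (omega n ^ Suc m) ^ j)) (kp k m) = 0" by simp
    qed
    finally show ?thesis .
  qed
  have s1: "(\<Sum>j<Suc n. - P j) = 0" unfolding sum_negf sumP by simp
  define Sq where "Sq = (\<Sum>j<Suc n. q j)"
  have e1: "Sq + real (Suc n) *\<^sub>R Y - Sq * Y = 0"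
  proof -
    have "(\<Sum>j<Suc n. - P j) = (\<Sum>j<Suc n. qp (q j) Y)" by (rule sum.cong[OF refl]) (metis PP lessThan_iff)
    then have "0 = (\<Sum>j<Suc n. q j + Y - q j * Y)" unfolding s1 qp_def .
    also have "\<dots> = Sq + real (Suc n) *\<^sub>R Y - Sq * Y"
      unfolding Sq_def by (simp del: sum.lessThan_Suc add: sum.distrib sum_subtractf sum_distrib_right sum_constant_scaleR)
    finally show ?thesis by simp
  qed
  have e2: "Sq + real (Suc n) *\<^sub>R Y - Y * Sq = 0"
  proof -
    have "(\<Sum>j<Suc n. - P j) = (\<Sum>j<Suc n. qp Y (q j))" by (rule sum.cong[OF refl]) (metis PP lessThan_iff)
    then have "0 = (\<Sum>j<Suc n. Y + q j - Y * q j)" unfolding s1 qp_def .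
    also have "\<dots> = Sq + real (Suc n) *\<^sub>R Y - Y * Sq"
      unfolding Sq_def by (simp del: sum.lessThan_Suc add: sum.distrib sum_subtractf sum_distrib_left sum_constant_scaleR algebra_simps)
    finally show ?thesis by simp
  qed
  define S where "S = (1 / real (Suc n)) *\<^sub>R Sq"
  have N: "(1 / real (Suc n)) * real (Suc n) = 1" by (simp del: of_nat_Suc)
  have "qp S Y = (1 / real (Suc n)) *\<^sub>R (Sq + real (Suc n) *\<^sub>R Y - Sq * Y)"
    unfolding S_def qp_def
    by (simp only: scaleR_add_right scaleR_diff_right scaleR_scaleR N scaleR_one mult_scaleR_left mult_scaleR_right)
  also have "\<dots> = 0" using e1 by simp
  finally have 1: "qp S Y = 0" .
  have "qp Y S = (1 / real (Suc n)) *\<^sub>R (Sq + real (Suc n) *\<^sub>R Y - Y * Sq)"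
    unfolding S_def qp_def
    by (simp only: scaleR_add_right scaleR_diff_right scaleR_scaleR N scaleR_one mult_scaleR_left mult_scaleR_right add.commute)
  also have "\<dots> = 0" using e2 by simp
  finally have 2: "qp Y S = 0" .
  show ?thesis using 1 2 unfolding qinv_def S_def Sq_def Y_def by simp
qed

lemma qinv_small_y:
  fixes y q :: "'a::cstar_algebra"
  assumes "qinv y q" "norm q \<le> 1/3"
  shows "norm y \<le> 1/2"
proof -
  have "q + y - q * y = 0" using assms(1) by (simp add: qinv_def qp_def)
  then have "y = q * y - q" by (simp add: algebra_simps)
  then have "norm y \<le> norm (q * y) + norm q" by (metis norm_triangle_ineq4)
  also have "\<dots> \<le> norm q * norm y + norm q" by (simp add: norm_mult_ineq)
  finally have "norm y \<le> norm q * norm y + norm q" .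
  moreover have "norm q * norm y \<le> 1/3 * norm y" using assms(2) by (rule mult_right_mono) simp
  ultimately show ?thesis using assms(2) by linarith
qed

lemma kp_pow2:
  fixes k :: "'a::cstar_algebra"
  assumes "cstar k = k"
  shows "norm (kp k (2 ^ M - 1)) = norm k ^ (2 ^ M)"
proof (induct M)
  case 0 then show ?case by simp
next
  case (Suc M)
  have e: "2 ^ Suc M - 1 = Suc ((2 ^ M - 1) + (2 ^ M - 1))"
  proof -
    have "(1::nat) \<le> 2 ^ M" by simp
    then show ?thesis by (simp only: power_Suc)
  qed
  have "norm (kp k (2 ^ Suc M - 1)) = norm (kp k (2 ^ M - 1) * kp k (2 ^ M - 1))"
    unfolding e kp_add ..
  also have "\<dots> = norm (cstar (kp k (2 ^ M - 1)) * kp k (2 ^ M - 1))"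
    using cstar_kp[OF assms] by simp
  also have "\<dots> = (norm k ^ (2 ^ M))\<^sup>2" unfolding cstar_identity Suc ..
  finally show ?case by (simp add: power_mult[symmetric] mult.commute)
qed

context
  fixes k :: "'a::cstar_algebra"
  assumes sa: "cstar k = k" and nk: "norm k = 1"
    and H: "\<And>z. cmod z \<le> 1 \<Longrightarrow> \<exists>q. qinv (cscale z k) q"
begin

definition "QQ z = (THE q. qinv (cscale z k) q)"

lemma QQ: "cmod z \<le> 1 \<Longrightarrow> qinv (cscale z k) (QQ z)"
  unfolding QQ_def using H by (metis (mono_tags) theI qinv_unique)

lemma QQ_cont: "continuous_on (cball 0 1) QQ"
  unfolding continuous_on_iff
proof (intro ballI allI impI)
  fix z0 :: complex and e :: real
  assume z0: "z0 \<in> cball 0 1" and e: "0 < e"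
  define q0 where "q0 = QQ z0"
  have q0: "qinv (cscale z0 k) q0" using QQ z0 q0_def by simp
  define C where "C = 1 + norm q0"
  have C: "C \<ge> 1" unfolding C_def by simp
  define d where "d = min (1 / (2 * C)) (e / (2 * C^2))"
  have d: "d > 0" unfolding d_def using C e by simp
  show "\<exists>d>0. \<forall>x'\<in>cball 0 1. dist x' z0 < d \<longrightarrow> dist (QQ x') (QQ z0) < e"
  proof (intro exI[of _ d] conjI d ballI impI)
    fix z assume z: "z \<in> cball 0 1" and dz: "dist z z0 < d"
    define t where "t = cmod (z - z0)"
    have nt: "norm (cscale z k - cscale z0 k) = t"
      unfolding t_def by (simp add: cscale_diff_left[symmetric] norm_cscale nk)
    have tC: "t * C < 1/2" using dz C unfolding d_def t_def dist_norm
      by (simp add: field_simps)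
    have t0: "t \<ge> 0" unfolding t_def by simp
    have sm: "norm (cscale z k - cscale z0 k) * (1 + norm q0) < 1" using nt tC C_def by simp
    obtain q where q: "qinv (cscale z k) q"
      "norm (q - q0) \<le> (1 + norm q0) * (norm (cscale z k - cscale z0 k) * (1 + norm q0) / (1 - norm (cscale z k - cscale z0 k) * (1 + norm q0)))"
      using qinv_perturb[OF q0 sm] by blast
    have "qinv (cscale z k) (QQ z)" using z by (intro QQ) simp
    then have qq: "QQ z = q" using q(1) by (rule qinv_unique)
    have "norm (q - q0) \<le> C * (t * C / (1 - t * C))" using q(2) unfolding nt C_def .
    also have "\<dots> \<le> C * (2 * (t * C))"
    proof (rule mult_left_mono)
      have u0: "0 \<le> t * C" using t0 C by simp
      have m: "t * C * (2 * (t * C)) \<le> t * C * 1" by (rule mult_left_mono) (use tC u0 in auto)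
      have "t * C \<le> 2 * (t * C) * (1 - t * C)" using m by (simp add: algebra_simps)
      then show "t * C / (1 - t * C) \<le> 2 * (t * C)"
        using tC by (subst pos_divide_le_eq) auto
    qed (use C in simp)
    also have "\<dots> < e"
    proof -
      have "t < e / (2 * C^2)" using dz unfolding d_def t_def dist_norm by simp
      then have "t * (2 * C^2) < e" using C by (simp add: field_simps)
      then show ?thesis by (simp add: power2_eq_square algebra_simps)
    qed
    finally show "dist (QQ z) (QQ z0) < e" unfolding qq dist_norm q0_def by simp
  qed
qed


definition "YY \<rho> n = (\<rho> ^ Suc n) *\<^sub>R kp k n"
definition "SS \<rho> n = (1 / real (Suc n)) *\<^sub>R (\<Sum>j<Suc n. QQ (complex_of_real \<rho> * omega n ^ j))"

lemma SS_qinv: "0 \<le> \<rho> \<Longrightarrow> \<rho> \<le> 1 \<Longrightarrow> qinv (YY \<rho> n) (SS \<rho> n)"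
proof -
  assume r: "0 \<le> \<rho>" "\<rho> \<le> 1"
  have "qinv (cscale (complex_of_real \<rho> ^ Suc n) (kp k n)) (SS \<rho> n)"
    unfolding SS_def
  proof (rule root_avg)
    fix j assume "j < Suc n"
    have "cmod (complex_of_real \<rho> * omega n ^ j) \<le> 1" using r by (simp add: norm_mult)
    then show "qinv (cscale (complex_of_real \<rho> * omega n ^ j) k) (QQ (complex_of_real \<rho> * omega n ^ j))"
      by (rule QQ)
  qed
  then show ?thesis unfolding YY_def scaleR_cscale by (simp only: of_real_power)
qed

lemma YY_tendsto_SS:
  assumes r: "0 \<le> \<rho>" "\<rho> \<le> 1" and lim: "(\<lambda>n. YY \<rho> n) \<longlonglongrightarrow> 0"
  shows "eventually (\<lambda>n. norm (SS \<rho> n) \<le> 1/6) sequentially"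
proof -
  have "eventually (\<lambda>n. norm (YY \<rho> n) < 1/7) sequentially"
    using lim unfolding tendsto_iff dist_norm by (auto elim!: allE[of _ "1/7"])
  then show ?thesis
  proof eventually_elim
    case (elim n)
    have "norm (SS \<rho> n) \<le> norm (YY \<rho> n) / (1 - norm (YY \<rho> n))"
      using qinv_bound[OF SS_qinv[OF r] ] elim by simp
    also have "\<dots> \<le> (1/7) / (1 - 1/7)"
      using elim by (intro frac_le) auto
    finally show ?case by simp
  qed
qed

lemma rickart_False: False
proof -
  have uc: "uniformly_continuous_on (cball 0 1) QQ"
    by (rule compact_uniformly_continuous[OF QQ_cont]) simp
  obtain \<delta> where \<delta>: "\<delta> > 0" "\<And>z w. z \<in> cball 0 1 \<Longrightarrow> w \<in> cball 0 1 \<Longrightarrow> dist w z < \<delta> \<Longrightarrow> dist (QQ w) (QQ z) < 1/6"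
    using uc unfolding uniformly_continuous_on_def by (meson zero_less_divide_1_iff zero_less_numeral)
  have close: "norm (SS \<rho> n - SS \<rho>0 n) \<le> 1/6"
    if r: "0 \<le> \<rho>" "\<rho> \<le> 1" "0 \<le> \<rho>0" "\<rho>0 \<le> 1" "\<bar>\<rho> - \<rho>0\<bar> < \<delta>" for \<rho> \<rho>0 n
  proof -
    define a where "a j = complex_of_real \<rho> * omega n ^ j" for j
    define b where "b j = complex_of_real \<rho>0 * omega n ^ j" for j
    have ab: "norm (QQ (a j) - QQ (b j)) \<le> 1/6" for j
    proof -
      have "a j \<in> cball 0 1" "b j \<in> cball 0 1" using r unfolding a_def b_def by (auto simp: norm_mult)
      moreover have "dist (a j) (b j) < \<delta>"
      proof -
        have "a j - b j = complex_of_real (\<rho> - \<rho>0) * omega n ^ j" unfolding a_def b_def by (simp add: algebra_simps)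
        then show ?thesis using r by (simp add: dist_norm norm_mult of_real_diff[symmetric] del: of_real_diff)
      qed
      ultimately show ?thesis using \<delta>(2)[of "b j" "a j"] by (simp add: dist_norm)
    qed
    have "SS \<rho> n - SS \<rho>0 n = (1 / real (Suc n)) *\<^sub>R (\<Sum>j<Suc n. QQ (a j) - QQ (b j))"
      unfolding SS_def a_def b_def by (simp add: sum_subtractf scaleR_diff_right)
    also have "norm \<dots> \<le> (1 / real (Suc n)) * (\<Sum>j<Suc n. norm (QQ (a j) - QQ (b j)))"
      by (simp only: norm_scaleR abs_of_nonneg[of "1 / real (Suc n)", OF divide_nonneg_nonneg[OF zero_le_one of_nat_0_le_iff]]) (intro mult_left_mono norm_sum, simp)
    also have "\<dots> \<le> (1 / real (Suc n)) * (\<Sum>j<Suc n. 1/6)"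
      by (intro mult_left_mono sum_mono ab) simp
    also have "\<dots> = 1/6" by (simp del: of_nat_Suc)
    finally show ?thesis .
  qed
  define good where "good \<rho> \<longleftrightarrow> (\<lambda>n. YY \<rho> n) \<longlonglongrightarrow> 0" for \<rho>
  have step1: "eventually (\<lambda>n. norm (YY \<rho> n) \<le> 1/2) sequentially"
    if r: "0 \<le> \<rho>" "\<rho> \<le> 1" "0 \<le> \<rho>0" "\<rho>0 \<le> 1" "\<bar>\<rho> - \<rho>0\<bar> < \<delta>" and g: "good \<rho>0" for \<rho> \<rho>0
  proof -
    have "eventually (\<lambda>n. norm (SS \<rho>0 n) \<le> 1/6) sequentially"
      using YY_tendsto_SS[OF r(3,4)] g unfolding good_def by simp
    then show ?thesis
    proof eventually_elim
      case (elim n)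
      have "norm (SS \<rho> n) \<le> norm (SS \<rho> n - SS \<rho>0 n) + norm (SS \<rho>0 n)"
        by (metis norm_triangle_sub add.commute)
      also have "\<dots> \<le> 1/3" using close[OF r, of n] elim by simp
      finally show ?case by (rule qinv_small_y[OF SS_qinv[OF r(1,2)]])
    qed
  qed
  have step2: "good \<rho>'" if ev: "eventually (\<lambda>n. norm (YY \<rho> n) \<le> 1/2) sequentially"
    and r: "0 \<le> \<rho>'" "\<rho>' < \<rho>" for \<rho> \<rho>'
  proof -
    have rp: "\<rho> > 0" using r by simp
    have "eventually (\<lambda>n. norm (YY \<rho>' n) \<le> (\<rho>' / \<rho>) ^ Suc n / 2) sequentially"
      using ev
    proof eventually_elim
      case (elim n)
      have "YY \<rho>' n = ((\<rho>' / \<rho>) ^ Suc n) *\<^sub>R YY \<rho> n"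
        unfolding YY_def using rp by (simp add: power_divide)
      then have "norm (YY \<rho>' n) = (\<rho>' / \<rho>) ^ Suc n * norm (YY \<rho> n)" using r rp by simp
      also have "\<dots> \<le> (\<rho>' / \<rho>) ^ Suc n * (1/2)" using elim r rp by (intro mult_left_mono) auto
      finally show ?case by simp
    qed
    moreover have "(\<lambda>n. (\<rho>' / \<rho>) ^ Suc n / 2) \<longlonglongrightarrow> 0"
    proof -
      have "(\<lambda>n. (\<rho>' / \<rho>) ^ n) \<longlonglongrightarrow> 0" using r rp by (intro LIMSEQ_power_zero) auto
      then have "(\<lambda>n. (\<rho>' / \<rho>) ^ Suc n) \<longlonglongrightarrow> 0" by (rule LIMSEQ_Suc)
      then show ?thesis by (intro tendsto_divide_zero)
    qed
    ultimately show ?thesis unfolding good_def by (rule Lim_null_comparison)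
  qed
  have good0: "good 0" unfolding good_def YY_def by simp
  have ind: "\<forall>\<rho>. 0 \<le> \<rho> \<and> \<rho> < 1 \<and> \<rho> < real m * (\<delta>/2) \<longrightarrow> good \<rho>" for m
  proof (induct m)
    case 0 then show ?case by auto
  next
    case (Suc m)
    show ?case
    proof (intro allI impI)
      fix \<rho> assume r: "0 \<le> \<rho> \<and> \<rho> < 1 \<and> \<rho> < real (Suc m) * (\<delta>/2)"
      define \<rho>0 where "\<rho>0 = max 0 (\<rho> - \<delta>/2)"
      have g0: "good \<rho>0"
      proof (cases "\<rho> - \<delta>/2 \<le> 0")
        case True then show ?thesis unfolding \<rho>0_def using good0 by simp
      next
        case False
        then have "\<rho>0 = \<rho> - \<delta>/2" unfolding \<rho>0_def by simp
        moreover have "\<rho> - \<delta>/2 < real m * (\<delta>/2)" using r by (simp add: algebra_simps)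
        moreover have "0 \<le> \<rho> - \<delta>/2" "\<rho> - \<delta>/2 < 1" using False r \<delta>(1) by auto
        ultimately show ?thesis using Suc by blast
      qed
      define \<rho>1 where "\<rho>1 = min 1 (\<rho> + \<delta>/4)"
      have "eventually (\<lambda>n. norm (YY \<rho>1 n) \<le> 1/2) sequentially"
        by (rule step1[OF _ _ _ _ _ g0]) (use r \<delta>(1) in \<open>auto simp: \<rho>0_def \<rho>1_def\<close>)
      then show "good \<rho>" by (rule step2) (use r \<delta>(1) in \<open>auto simp: \<rho>1_def\<close>)
    qed
  qed
  obtain m :: nat where m: "1 < real m * (\<delta>/2)"
    using reals_Archimedean2[of "2 / \<delta>"] \<delta>(1) by (auto simp: field_simps)
  define \<rho>0 where "\<rho>0 = max 0 (1 - \<delta>/2)"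
  have "0 \<le> \<rho>0" "\<rho>0 < 1" "\<rho>0 < real m * (\<delta>/2)" using m \<delta>(1) unfolding \<rho>0_def by (auto simp: max_def)
  then have "good \<rho>0" using ind[of m] by blast
  then have "eventually (\<lambda>n. norm (YY 1 n) \<le> 1/2) sequentially"
    by (intro step1[of 1 \<rho>0]) (use \<delta>(1) in \<open>auto simp: \<rho>0_def\<close>)
  then obtain N where N: "\<And>n. n \<ge> N \<Longrightarrow> norm (kp k n) \<le> 1/2"
    unfolding eventually_sequentially YY_def by auto
  have "N \<le> 2 ^ N - 1"
  proof -
    have "N < 2 ^ N" by (rule less_exp)
    then show ?thesis by linarith
  qed
  then have "norm (kp k (2 ^ N - 1)) \<le> 1/2" by (rule N)
  moreover have "norm (kp k (2 ^ N - 1)) = 1" using kp_pow2[OF sa, of N] nk by simp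
  ultimately show False by simp
qed

end


lemma rickart:
  fixes k :: "'a::cstar_algebra"
  assumes "cstar k = k" "norm k = 1"
  shows "\<exists>z. cmod z \<le> 1 \<and> \<not> (\<exists>q. qinv (cscale z k) q)"
  using rickart_False[OF assms] by blast

definition star_hom :: "('a::cstar_algebra \<Rightarrow> 'a) \<Rightarrow> bool" where
  "star_hom f \<longleftrightarrow> (\<forall>x y. f (x + y) = f x + f y) \<and> (\<forall>c x. f (cscale c x) = cscale c (f x))
     \<and> (\<forall>x y. f (x * y) = f x * f y) \<and> (\<forall>x. f (cstar x) = cstar (f x))"

lemma is_aut_star_hom: "is_aut f \<Longrightarrow> star_hom f"
  unfolding is_aut_def star_hom_def by blast

context
  fixes f :: "'a::cstar_algebra \<Rightarrow> 'a"
  assumes f: "star_hom f"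
begin

lemma sh_add: "f (x + y) = f x + f y" using f unfolding star_hom_def by blast
lemma sh_cscale: "f (cscale c x) = cscale c (f x)" using f unfolding star_hom_def by blast
lemma sh_mult: "f (x * y) = f x * f y" using f unfolding star_hom_def by blast
lemma sh_cstar: "f (cstar x) = cstar (f x)" using f unfolding star_hom_def by blast
lemma sh_zero: "f 0 = 0" using sh_add[of 0 0] by simp
lemma sh_minus: "f (- x) = - f x" using sh_add[of x "-x"] sh_zero by (simp add: eq_neg_iff_add_eq_0 add.commute)
lemma sh_diff: "f (x - y) = f x - f y" using sh_add[of x "-y"] sh_minus by simp
lemma sh_qp: "f (qp x y) = qp (f x) (f y)" by (simp add: qp_def sh_add sh_diff sh_mult)
lemma sh_qinv: "qinv y q \<Longrightarrow> qinv (f y) (f q)" unfolding qinv_def by (simp add: sh_qp[symmetric] sh_zero)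
lemma sh_scaleR: "f (r *\<^sub>R x) = r *\<^sub>R f x" by (simp add: scaleR_cscale sh_cscale)

lemma sh_contract: "norm (f x) \<le> norm x"
proof -
  define h where "h = cstar x * x"
  have hs: "cstar h = h" unfolding h_def by (simp add: cstar_mult cstar_cstar)
  have fh: "norm (f h) \<le> norm h"
  proof (rule ccontr)
    assume "\<not> norm (f h) \<le> norm h"
    then have lt: "norm h < norm (f h)" by simp
    define c where "c = norm (f h)"
    have c: "c > 0" using lt unfolding c_def by (metis norm_ge_zero le_less_trans)
    define k where "k = (1 / c) *\<^sub>R f h"
    have ks: "cstar k = k" unfolding k_def by (simp add: cstar_scaleR sh_cstar[symmetric] hs)
    have kn: "norm k = 1" unfolding k_def using c by (simp add: c_def)
    obtain z where z: "cmod z \<le> 1" "\<not> (\<exists>q. qinv (cscale z k) q)" using rickart[OF ks kn] by blast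
    define w where "w = z * complex_of_real (1 / c)"
    have eq: "cscale z k = f (cscale w h)"
      unfolding k_def w_def by (simp only: sh_cscale scaleR_cscale cscale_mult)
    have "norm (cscale w h) = cmod z / c * norm h" unfolding w_def using c by (simp add: norm_cscale norm_mult norm_divide)
    also have "\<dots> \<le> norm h / c" using z(1) c by (simp add: divide_right_mono mult_left_le_one_le)
    also have "\<dots> < 1" using lt c unfolding c_def by simp
    finally obtain q where "qinv (cscale w h) q" using neumann by blast
    then have "qinv (cscale z k) (f q)" unfolding eq by (rule sh_qinv)
    then show False using z(2) by blast
  qed
  have "(norm (f x))\<^sup>2 = norm (f h)" unfolding h_def by (simp add: sh_mult sh_cstar cstar_identity)
  also have "\<dots> \<le> norm h" by (rule fh)
  also have "\<dots> = (norm x)\<^sup>2" unfolding h_def by (simp add: cstar_identity)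
  finally show ?thesis by (rule power2_le_imp_le) simp
qed

lemma sh_lipschitz: "dist (f x) (f y) \<le> dist x y"
  unfolding dist_norm sh_diff[symmetric] by (rule sh_contract)

end


section \<open>Multipliers\<close>

lemma nondeg_left:
  fixes a b :: "'a::cstar_algebra"
  assumes "\<And>z. z * a = z * b" shows "a = b"
proof -
  have "cstar (a - b) * (a - b) = 0" using assms[of "cstar (a - b)"] by (simp add: algebra_simps)
  then have "(norm (a - b))\<^sup>2 = 0" by (simp add: cstar_identity[symmetric])
  then show ?thesis by simp
qed

lemma nondeg_right:
  fixes a b :: "'a::cstar_algebra"
  assumes "\<And>z. a * z = b * z" shows "a = b"
proof -
  have "(a - b) * cstar (a - b) = 0" using assms[of "cstar (a - b)"] by (simp add: algebra_simps)
  then have "cstar (cstar (a - b)) * cstar (a - b) = 0" by (simp add: cstar_cstar)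
  then have "(norm (cstar (a - b)))\<^sup>2 = 0" by (simp only: cstar_identity[symmetric] norm_zero)
  then show ?thesis by simp
qed

context
  fixes m :: "'a::cstar_algebra multiplier"
  assumes m: "is_multiplier m"
begin

lemma mult_prop: "x * fst m y = snd m x * y"
  using m unfolding is_multiplier_def by blast

lemma L_mult: "fst m (y * z) = fst m y * z"
  by (rule nondeg_left) (simp add: mult_prop mult.assoc[symmetric])

lemma R_mult: "snd m (y * z) = y * snd m z"
  by (rule nondeg_right) (simp add: mult_prop[symmetric] mult.assoc)

lemma L_add: "fst m (x + y) = fst m x + fst m y"
  by (rule nondeg_left) (simp add: mult_prop distrib_left distrib_right)

lemma R_add: "snd m (x + y) = snd m x + snd m y"
  by (rule nondeg_right) (simp add: mult_prop[symmetric] distrib_left distrib_right)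

lemma L_zero: "fst m 0 = 0" using L_add[of 0 0] by simp
lemma R_zero: "snd m 0 = 0" using R_add[of 0 0] by simp
lemma L_minus: "fst m (- x) = - fst m x" using L_add[of x "-x"] L_zero by (simp add: eq_neg_iff_add_eq_0 add.commute)
lemma R_minus: "snd m (- x) = - snd m x" using R_add[of x "-x"] R_zero by (simp add: eq_neg_iff_add_eq_0 add.commute)
lemma L_diff: "fst m (x - y) = fst m x - fst m y" using L_add[of x "-y"] L_minus by simp
lemma R_diff: "snd m (x - y) = snd m x - snd m y" using R_add[of x "-y"] R_minus by simp

end

lemma LR_comm:
  assumes m: "is_multiplier m" and n: "is_multiplier n"
  shows "fst m (snd n x) = snd n (fst m x)"
proof (rule nondeg_right)
  fix w
  have "fst m (snd n x) * w = fst m (snd n x * w)" by (simp add: L_mult[OF m])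
  also have "\<dots> = fst m (x * fst n w)" by (simp add: mult_prop[OF n])
  also have "\<dots> = fst m x * fst n w" by (simp add: L_mult[OF m])
  also have "\<dots> = snd n (fst m x) * w" by (simp add: mult_prop[OF n])
  finally show "fst m (snd n x) * w = snd n (fst m x) * w" .
qed

lemma LR_comm_fun:
  assumes "is_multiplier m" "is_multiplier n"
  shows "fst m \<circ> snd n = snd n \<circ> fst m"
  using LR_comm[OF assms] by auto

lemma mmult_assoc: "mmult (mmult a b) c = mmult a (mmult b c)"
  by (simp add: mmult_def comp_assoc)

lemma mmult_mone[simp]: "mmult mone a = a" "mmult a mone = a"
  by (simp_all add: mmult_def mone_def)

lemma mstar_mstar[simp]: "mstar (mstar (m::'a::cstar_algebra multiplier)) = m"
proof -
  have "cstar \<circ> (cstar \<circ> f \<circ> cstar) \<circ> cstar = f" for f :: "'a \<Rightarrow> 'a"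
    by (auto simp: cstar_cstar)
  then show ?thesis by (simp add: mstar_def)
qed

lemma mstar_mmult: "mstar (mmult a b) = mmult (mstar b) (mstar (a::'a::cstar_algebra multiplier))"
  by (auto simp: mstar_def mmult_def cstar_cstar)

lemma mstar_mone[simp]: "mstar mone = (mone::'a::cstar_algebra multiplier)"
  by (auto simp: mstar_def mone_def cstar_cstar)

lemma is_multiplier_mone: "is_multiplier (mone::'a::cstar_algebra multiplier)"
  by (simp add: is_multiplier_def mone_def)

lemma is_multiplier_mmult: "is_multiplier m \<Longrightarrow> is_multiplier n \<Longrightarrow> is_multiplier (mmult m n)"
  by (simp add: is_multiplier_def mmult_def)

lemma is_multiplier_mstar: "is_multiplier (m::'a::cstar_algebra multiplier) \<Longrightarrow> is_multiplier (mstar m)"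
  unfolding is_multiplier_def mstar_def
proof (intro allI, simp)
  fix x y assume m: "\<forall>x y. x * fst m y = snd m x * y"
  have "x * cstar (snd m (cstar y)) = cstar (snd m (cstar y) * cstar x)" by (simp add: cstar_mult cstar_cstar)
  also have "\<dots> = cstar (cstar y * fst m (cstar x))" using m by simp
  also have "\<dots> = cstar (fst m (cstar x)) * y" by (simp add: cstar_mult cstar_cstar)
  finally show "x * cstar (snd m (cstar y)) = cstar (fst m (cstar x)) * y" .
qed

lemma unitary_mult_mult: "unitary_mult m \<Longrightarrow> is_multiplier m"
  by (simp add: unitary_mult_def)

lemma unitary_mone: "unitary_mult (mone::'a::cstar_algebra multiplier)"
  by (simp add: unitary_mult_def is_multiplier_mone)

lemma unitary_mstar: "unitary_mult (u::'a::cstar_algebra multiplier) \<Longrightarrow> unitary_mult (mstar u)"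
  by (simp add: unitary_mult_def is_multiplier_mstar)

lemma unitary_mmult: "unitary_mult (u::'a::cstar_algebra multiplier) \<Longrightarrow> unitary_mult v \<Longrightarrow> unitary_mult (mmult u v)"
proof -
  assume u: "unitary_mult u" and v: "unitary_mult v"
  have "mmult (mmult u v) (mstar (mmult u v)) = mmult u (mmult (mmult v (mstar v)) (mstar u))"
    by (simp add: mstar_mmult mmult_assoc)
  also have "\<dots> = mone" using u v by (simp add: unitary_mult_def)
  finally have 1: "mmult (mmult u v) (mstar (mmult u v)) = mone" .
  have "mmult (mstar (mmult u v)) (mmult u v) = mmult (mstar v) (mmult (mmult (mstar u) u) v)"
    by (simp add: mstar_mmult mmult_assoc)
  also have "\<dots> = mone" using u v by (simp add: unitary_mult_def)
  finally show ?thesis using 1 u v by (simp add: unitary_mult_def is_multiplier_mmult)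
qed

lemma unitary_cancel:
  assumes "unitary_mult u"
  shows "mmult u (mstar u) = mone" "mmult (mstar u) u = mone"
    "mmult u (mmult (mstar u) z) = z" "mmult (mstar u) (mmult u z) = z"
  using assms by (simp_all add: unitary_mult_def mmult_assoc[symmetric])

lemma unitary_L_isometric:
  assumes u: "unitary_mult (u::'a::cstar_algebra multiplier)"
  shows "norm (fst u x) = norm x"
proof -
  have us: "is_multiplier (mstar u)" using u by (simp add: unitary_mult_def is_multiplier_mstar)
  have inv: "fst (mstar u) (fst u x) = x"
    using u unfolding unitary_mult_def by (metis comp_apply fst_conv id_apply mmult_def mone_def)
  have "cstar (fst u x) = snd (mstar u) (cstar x)" by (simp add: mstar_def cstar_cstar)
  then have "cstar (fst u x) * fst u x = cstar x * fst (mstar u) (fst u x)"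
    by (simp add: mult_prop[OF us])
  then have "cstar (fst u x) * fst u x = cstar x * x" using inv by simp
  then have "(norm (fst u x))\<^sup>2 = (norm x)\<^sup>2" by (simp add: cstar_identity[symmetric])
  then show ?thesis by (simp add: power2_eq_iff_nonneg)
qed

lemma unitary_R_isometric:
  assumes u: "unitary_mult (u::'a::cstar_algebra multiplier)"
  shows "norm (snd u x) = norm x"
proof -
  have us: "unitary_mult (mstar u)" using u by (rule unitary_mstar)
  have "snd u x = cstar (fst (mstar u) (cstar x))" by (simp add: mstar_def cstar_cstar)
  then show ?thesis using unitary_L_isometric[OF us] by simp
qed

lemma unitary_L_lipschitz: "unitary_mult u \<Longrightarrow> dist (fst u x) (fst u y) \<le> dist x y"
  by (simp add: dist_norm L_diff[OF unitary_mult_mult, symmetric] unitary_L_isometric)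

lemma unitary_R_lipschitz: "unitary_mult u \<Longrightarrow> dist (snd u x) (snd u y) \<le> dist x y"
  by (simp add: dist_norm R_diff[OF unitary_mult_mult, symmetric] unitary_R_isometric)


section \<open>Automorphisms and their extensions\<close>

definition aut :: "('a::cstar_algebra \<Rightarrow> 'a) \<Rightarrow> bool" where
  "aut f \<longleftrightarrow> bij f \<and> star_hom f"

lemma is_aut_aut: "is_aut f \<longleftrightarrow> aut f"
  unfolding is_aut_def aut_def star_hom_def by blast

lemma aut_bij: "aut f \<Longrightarrow> bij f" and aut_sh: "aut f \<Longrightarrow> star_hom f"
  by (simp_all add: aut_def)

lemma aut_f_inv: "aut f \<Longrightarrow> f (inv f x) = x"
  by (simp add: aut_def bij_is_surj surj_f_inv_f)

lemma aut_inv_f: "aut f \<Longrightarrow> inv f (f x) = x"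
  by (simp add: aut_def bij_is_inj inv_f_f)

lemma aut_inv: "aut f \<Longrightarrow> aut (inv f)"
proof -
  assume f: "aut f"
  have sh: "star_hom f" using f by (simp add: aut_def)
  have eq: "inv f y = x \<longleftrightarrow> y = f x" for x y using f
    by (metis aut_f_inv aut_inv_f)
  show ?thesis unfolding aut_def star_hom_def
  proof (intro conjI allI)
    show "bij (inv f)" using f by (simp add: aut_def bij_imp_bij_inv)
    show "inv f (x + y) = inv f x + inv f y" for x y
      unfolding eq by (simp add: sh_add[OF sh] aut_f_inv[OF f])
    show "inv f (cscale c x) = cscale c (inv f x)" for c x
      unfolding eq by (simp add: sh_cscale[OF sh] aut_f_inv[OF f])
    show "inv f (x * y) = inv f x * inv f y" for x y
      unfolding eq by (simp add: sh_mult[OF sh] aut_f_inv[OF f])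
    show "inv f (cstar x) = cstar (inv f x)" for x
      unfolding eq by (simp add: sh_cstar[OF sh] aut_f_inv[OF f])
  qed
qed

lemma aut_comp: "aut f \<Longrightarrow> aut g \<Longrightarrow> aut (f \<circ> g)"
  unfolding aut_def star_hom_def by (auto intro: bij_comp)

lemma aut_id: "aut id"
  by (simp add: aut_def star_hom_def)

lemma aut_ext_mmult: "aut f \<Longrightarrow> aut_ext f (mmult m n) = mmult (aut_ext f m) (aut_ext f n)"
  by (auto simp: aut_ext_def mmult_def aut_inv_f)

lemma aut_ext_mone: "aut f \<Longrightarrow> aut_ext f mone = mone"
  by (auto simp: aut_ext_def mone_def aut_f_inv)

lemma aut_ext_comp: "aut f \<Longrightarrow> aut g \<Longrightarrow> aut_ext (f \<circ> g) m = aut_ext f (aut_ext g m)"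
  by (simp add: aut_ext_def aut_def o_inv_distrib comp_assoc)

lemma aut_ext_id[simp]: "aut_ext id m = m"
  by (simp add: aut_ext_def)

lemma aut_ext_mstar: "aut f \<Longrightarrow> aut_ext f (mstar m) = mstar (aut_ext f m)"
proof -
  assume f: "aut f"
  have a: "f (cstar x) = cstar (f x)" for x using f by (simp add: aut_def sh_cstar)
  have b: "inv f (cstar x) = cstar (inv f x)" for x using aut_inv[OF f] by (simp add: aut_def sh_cstar)
  show ?thesis by (auto simp: aut_ext_def mstar_def a b)
qed

lemma aut_ext_multiplier: "aut f \<Longrightarrow> is_multiplier m \<Longrightarrow> is_multiplier (aut_ext f m)"
proof -
  assume f: "aut f" and m: "is_multiplier m"
  have sh: "star_hom f" using f by (simp add: aut_def)
  show ?thesis unfolding is_multiplier_def aut_ext_def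
  proof (intro allI, simp)
    fix x y
    have "x * f (fst m (inv f y)) = f (inv f x * fst m (inv f y))" by (simp add: sh_mult[OF sh] aut_f_inv[OF f])
    also have "\<dots> = f (snd m (inv f x) * inv f y)" by (simp add: mult_prop[OF m])
    also have "\<dots> = f (snd m (inv f x)) * y" by (simp add: sh_mult[OF sh] aut_f_inv[OF f])
    finally show "x * f (fst m (inv f y)) = f (snd m (inv f x)) * y" .
  qed
qed

lemma aut_ext_unitary: "aut f \<Longrightarrow> unitary_mult u \<Longrightarrow> unitary_mult (aut_ext f u)"
  unfolding unitary_mult_def
  by (simp add: aut_ext_multiplier aut_ext_mstar[symmetric] aut_ext_mmult[symmetric] aut_ext_mone)

lemma aut_ad: "aut f \<Longrightarrow> f \<circ> ad u = ad (aut_ext f u) \<circ> f"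
proof -
  assume f: "aut f"
  have a: "f (cstar x) = cstar (f x)" for x using f by (simp add: aut_def sh_cstar)
  show ?thesis
    by (auto simp: ad_def aut_ext_def mstar_def a[symmetric] aut_inv_f[OF f])
qed

lemma ad_mmult: "is_multiplier u \<Longrightarrow> is_multiplier v \<Longrightarrow> ad (mmult u v) = ad u \<circ> ad (v::'a::cstar_algebra multiplier)"
proof -
  assume u: "is_multiplier u" and v: "is_multiplier v"
  have us: "is_multiplier (mstar u)" using u by (rule is_multiplier_mstar)
  have "ad (mmult u v) = fst u \<circ> (fst v \<circ> snd (mstar u)) \<circ> snd (mstar v)"
    by (auto simp: ad_def mmult_def mstar_def cstar_cstar)
  also have "fst v \<circ> snd (mstar u) = snd (mstar u) \<circ> fst v" by (rule LR_comm_fun[OF v us])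
  also have "fst u \<circ> (snd (mstar u) \<circ> fst v) \<circ> snd (mstar v) = ad u \<circ> ad v"
    unfolding ad_def by (simp only: comp_assoc)
  finally show ?thesis .
qed

lemma ad_mone: "ad mone = (id::'a::cstar_algebra \<Rightarrow> 'a)"
  by (auto simp: ad_def mone_def mstar_def cstar_cstar)

lemma ad_unitary_inv:
  assumes u: "unitary_mult (u::'a::cstar_algebra multiplier)"
  shows "ad u \<circ> ad (mstar u) = id" "ad (mstar u) \<circ> ad u = id"
proof -
  have m: "is_multiplier u" "is_multiplier (mstar u)" using u by (simp_all add: unitary_mult_def is_multiplier_mstar)
  show "ad u \<circ> ad (mstar u) = id"
    using ad_mmult[OF m] u by (simp add: unitary_mult_def ad_mone)
  show "ad (mstar u) \<circ> ad u = id"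
    using ad_mmult[OF m(2) m(1)] u by (simp add: unitary_mult_def ad_mone)
qed

lemma ad_bij: "unitary_mult u \<Longrightarrow> bij (ad u)"
  using ad_unitary_inv by (metis o_bij)

lemma ad_inv: "unitary_mult u \<Longrightarrow> inv (ad u) = ad (mstar u)"
  using ad_unitary_inv by (metis inv_unique_comp)


lemma aut_ext_comp_bij: "bij f \<Longrightarrow> bij g \<Longrightarrow> aut_ext (f \<circ> g) m = aut_ext f (aut_ext g m)"
  by (simp add: aut_ext_def o_inv_distrib comp_assoc)

lemma unitary_LL: "unitary_mult u \<Longrightarrow> fst u (fst (mstar u) x) = x"
proof -
  assume "unitary_mult u"
  then have "fst (mmult u (mstar u)) x = fst mone x" by (simp add: unitary_mult_def)
  then show ?thesis by (simp add: mmult_def mone_def)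
qed

lemma unitary_RR: "unitary_mult u \<Longrightarrow> snd (mstar u) (snd u x) = x"
proof -
  assume "unitary_mult u"
  then have "snd (mmult u (mstar u)) x = snd mone x" by (simp add: unitary_mult_def)
  then show ?thesis by (simp add: mmult_def mone_def)
qed

lemma aut_ext_ad:
  assumes u: "unitary_mult (u::'a::cstar_algebra multiplier)" and m: "is_multiplier m"
  shows "aut_ext (ad u) m = mmult (mmult u m) (mstar u)"
proof -
  have mu: "is_multiplier u" "is_multiplier (mstar u)" using u by (simp_all add: unitary_mult_def is_multiplier_mstar)
  have inv: "inv (ad u) = ad (mstar u)" by (rule ad_inv[OF u])
  have ad1: "ad u x = fst u (snd (mstar u) x)" for x by (simp add: ad_def)
  have ad2: "ad (mstar u) x = fst (mstar u) (snd u x)" for x by (simp add: ad_def)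
  have 1: "fst u (snd (mstar u) (fst m (fst (mstar u) (snd u x)))) = fst u (fst m (fst (mstar u) x))" for x
    by (simp only: LR_comm[OF m mu(2), symmetric] LR_comm[OF mu(2) mu(2), symmetric] unitary_RR[OF u])
  have 2: "fst u (snd (mstar u) (snd m (fst (mstar u) (snd u x)))) = snd (mstar u) (snd m (snd u x))" for x
    by (simp only: LR_comm[OF mu(2) mu(1)] LR_comm[OF mu(1) mu(2)] LR_comm[OF mu(1) m] LR_comm[OF mu(1) mu(1)] unitary_LL[OF u])
  show ?thesis
    unfolding aut_ext_def inv mmult_def using 1 2 by (auto simp: ad1 ad2)
qed

lemma twisted_aut: "twisted_action a \<alpha> \<Longrightarrow> aut (a x)"
  by (simp add: twisted_action_def is_aut_aut)

lemma twisted_unitary: "twisted_action a \<alpha> \<Longrightarrow> unitary_mult (\<alpha> x y)"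
  by (simp add: twisted_action_def)

lemma twisted_comp:
  assumes t: "twisted_action a \<alpha>" and m: "is_multiplier m"
  shows "aut_ext (a x) (aut_ext (a y) m) = mmult (mmult (\<alpha> x y) (aut_ext (a (x + y)) m)) (mstar (\<alpha> x y))"
proof -
  have "aut_ext (a x) (aut_ext (a y) m) = aut_ext (a x \<circ> a y) m"
    using t by (simp add: aut_ext_comp twisted_aut)
  also have "a x \<circ> a y = ad (\<alpha> x y) \<circ> a (x + y)" using t by (simp add: twisted_action_def)
  also have "aut_ext \<dots> m = aut_ext (ad (\<alpha> x y)) (aut_ext (a (x + y)) m)"
    using t by (intro aut_ext_comp_bij ad_bij twisted_unitary aut_bij twisted_aut)
  also have "\<dots> = mmult (mmult (\<alpha> x y) (aut_ext (a (x + y)) m)) (mstar (\<alpha> x y))"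
    using t m by (intro aut_ext_ad twisted_unitary aut_ext_multiplier twisted_aut)
  finally show ?thesis .
qed

lemma twisted_zero: "twisted_action a \<alpha> \<Longrightarrow> a 0 = id"
  and twisted_alpha0: "twisted_action a \<alpha> \<Longrightarrow> \<alpha> x 0 = mone" "twisted_action a \<alpha> \<Longrightarrow> \<alpha> 0 x = mone"
  and twisted_cocycle: "twisted_action a \<alpha> \<Longrightarrow> mmult (\<alpha> x y) (\<alpha> (x + y) z) = mmult (aut_ext (a x) (\<alpha> y z)) (\<alpha> x (y + z))"
  by (simp_all add: twisted_action_def)


notation mmult (infixl "\<star>" 70)

lemma cocycle_core:
  fixes T :: "'h::group_add \<Rightarrow> 'a::cstar_algebra multiplier \<Rightarrow> 'a multiplier"
    and S :: "'g::group_add \<Rightarrow> 'a multiplier \<Rightarrow> 'a multiplier"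
    and \<alpha> :: "'g \<Rightarrow> 'g \<Rightarrow> 'a multiplier" and \<alpha>t :: "'h \<Rightarrow> 'h \<Rightarrow> 'a multiplier"
    and \<kappa> :: "'g \<Rightarrow> 'h \<Rightarrow> 'a multiplier"
  assumes Tm: "\<And>\<xi> m n. T \<xi> (m \<star> n) = T \<xi> m \<star> T \<xi> n"
    and Ts: "\<And>\<xi> m. T \<xi> (mstar m) = mstar (T \<xi> m)"
    and Sm: "\<And>x m n. S x (m \<star> n) = S x m \<star> S x n"
    and Ss: "\<And>x m. S x (mstar m) = mstar (S x m)"
    and Ua: "\<And>x y. unitary_mult (\<alpha> x y)" and Uat: "\<And>\<xi> \<eta>. unitary_mult (\<alpha>t \<xi> \<eta>)"
    and Uk: "\<And>x \<xi>. unitary_mult (\<kappa> x \<xi>)"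
    and UT: "\<And>\<xi> u. unitary_mult u \<Longrightarrow> unitary_mult (T \<xi> u)"
    and US: "\<And>x u. unitary_mult u \<Longrightarrow> unitary_mult (S x u)"
    and TT: "\<And>\<xi> \<eta> u. unitary_mult u \<Longrightarrow> T \<xi> (T \<eta> u) = \<alpha>t \<xi> \<eta> \<star> T (\<xi> + \<eta>) u \<star> mstar (\<alpha>t \<xi> \<eta>)"
    and ST: "\<And>x \<eta> u. unitary_mult u \<Longrightarrow> S x (T \<eta> u) = \<kappa> x \<eta> \<star> T \<eta> (S x u) \<star> mstar (\<kappa> x \<eta>)"
    and C2: "\<And>x \<xi> \<eta>. S x (\<alpha>t \<xi> \<eta>) = \<kappa> x \<xi> \<star> T \<xi> (\<kappa> x \<eta>) \<star> \<alpha>t \<xi> \<eta> \<star> mstar (\<kappa> x (\<xi> + \<eta>))"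
    and C3: "\<And>x y \<xi>. T \<xi> (\<alpha> x y) = mstar (\<kappa> x \<xi>) \<star> S x (mstar (\<kappa> y \<xi>)) \<star> \<alpha> x y \<star> \<kappa> (x + y) \<xi>"
    and coc: "\<And>x y z. \<alpha> x y \<star> \<alpha> (x + y) z = S x (\<alpha> y z) \<star> \<alpha> x (y + z)"
    and coct: "\<And>\<xi> \<eta> \<zeta>. \<alpha>t \<xi> \<eta> \<star> \<alpha>t (\<xi> + \<eta>) \<zeta> = T \<xi> (\<alpha>t \<eta> \<zeta>) \<star> \<alpha>t \<xi> (\<eta> + \<zeta>)"
  shows "(T \<xi> (\<kappa> x \<eta>) \<star> \<alpha>t \<xi> \<eta> \<star> T (\<xi> + \<eta>) (\<alpha> x y)) \<star> (T (\<xi> + \<eta>) (\<kappa> (x + y) \<zeta>) \<star> \<alpha>t (\<xi> + \<eta>) \<zeta> \<star> T (\<xi> + \<eta> + \<zeta>) (\<alpha> (x + y) z))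
       = T \<xi> (S x (T \<eta> (\<kappa> y \<zeta>) \<star> \<alpha>t \<eta> \<zeta> \<star> T (\<eta> + \<zeta>) (\<alpha> y z))) \<star> (T \<xi> (\<kappa> x (\<eta> + \<zeta>)) \<star> \<alpha>t \<xi> (\<eta> + \<zeta>) \<star> T (\<xi> + (\<eta> + \<zeta>)) (\<alpha> x (y + z)))"
proof -
  note U = Ua Uat Uk UT US unitary_mstar unitary_mmult
  note canc = unitary_cancel(3,4)
  have I1: "S x (T \<eta> (\<kappa> y \<zeta>) \<star> \<alpha>t \<eta> \<zeta> \<star> T (\<eta> + \<zeta>) (\<alpha> y z))
     = \<kappa> x \<eta> \<star> (T \<eta> (S x (\<kappa> y \<zeta>)) \<star> (T \<eta> (\<kappa> x \<zeta>) \<star> (\<alpha>t \<eta> \<zeta> \<star> (T (\<eta> + \<zeta>) (S x (\<alpha> y z)) \<star> mstar (\<kappa> x (\<eta> + \<zeta>))))))"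
    by (simp add: Sm ST C2 mmult_assoc canc U)
  define \<theta> where "\<theta> = \<xi> + \<eta>"
  have R1: "T \<xi> (S x (T \<eta> (\<kappa> y \<zeta>) \<star> \<alpha>t \<eta> \<zeta> \<star> T (\<eta> + \<zeta>) (\<alpha> y z))) \<star> (T \<xi> (\<kappa> x (\<eta> + \<zeta>)) \<star> \<alpha>t \<xi> (\<eta> + \<zeta>) \<star> T (\<xi> + (\<eta> + \<zeta>)) (\<alpha> x (y + z)))
    = T \<xi> (\<kappa> x \<eta>) \<star> (\<alpha>t \<xi> \<eta> \<star> (T \<theta> (S x (\<kappa> y \<zeta>)) \<star> (T \<theta> (\<kappa> x \<zeta>) \<star> (mstar (\<alpha>t \<xi> \<eta>) \<star> (T \<xi> (\<alpha>t \<eta> \<zeta>) \<star> (\<alpha>t \<xi> (\<eta> + \<zeta>) \<star> (T (\<xi> + (\<eta> + \<zeta>)) (S x (\<alpha> y z)) \<star> T (\<xi> + (\<eta> + \<zeta>)) (\<alpha> x (y + z)))))))))"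
    unfolding I1 \<theta>_def by (simp add: Tm Ts TT mmult_assoc canc U)
  also have "\<dots> = T \<xi> (\<kappa> x \<eta>) \<star> (\<alpha>t \<xi> \<eta> \<star> (T \<theta> (S x (\<kappa> y \<zeta>)) \<star> (T \<theta> (\<kappa> x \<zeta>) \<star> (\<alpha>t \<theta> \<zeta> \<star> (T (\<theta> + \<zeta>) (\<alpha> x y) \<star> T (\<theta> + \<zeta>) (\<alpha> (x + y) z))))))"
  proof -
    have a: "T \<xi> (\<alpha>t \<eta> \<zeta>) \<star> (\<alpha>t \<xi> (\<eta> + \<zeta>) \<star> W) = \<alpha>t \<xi> \<eta> \<star> (\<alpha>t \<theta> \<zeta> \<star> W)" for W
      using coct[of \<xi> \<eta> \<zeta>] unfolding \<theta>_def by (simp add: mmult_assoc[symmetric])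
    have b: "T (\<xi> + (\<eta> + \<zeta>)) (S x (\<alpha> y z)) \<star> T (\<xi> + (\<eta> + \<zeta>)) (\<alpha> x (y + z)) = T (\<theta> + \<zeta>) (\<alpha> x y) \<star> T (\<theta> + \<zeta>) (\<alpha> (x + y) z)"
      unfolding Tm[symmetric] coc[symmetric] \<theta>_def by (simp add: add.assoc)
    show ?thesis unfolding a b by (simp add: canc U)
  qed
  also have "\<dots> = T \<xi> (\<kappa> x \<eta>) \<star> (\<alpha>t \<xi> \<eta> \<star> (T \<theta> (S x (\<kappa> y \<zeta>)) \<star> (T \<theta> (\<kappa> x \<zeta>) \<star> (T \<theta> (T \<zeta> (\<alpha> x y)) \<star> (\<alpha>t \<theta> \<zeta> \<star> T (\<theta> + \<zeta>) (\<alpha> (x + y) z))))))"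
  proof -
    have "T \<theta> (T \<zeta> (\<alpha> x y)) \<star> (\<alpha>t \<theta> \<zeta> \<star> W) = \<alpha>t \<theta> \<zeta> \<star> (T (\<theta> + \<zeta>) (\<alpha> x y) \<star> W)" for W
      by (simp add: TT U mmult_assoc canc)
    then show ?thesis by simp
  qed
  also have "\<dots> = T \<xi> (\<kappa> x \<eta>) \<star> (\<alpha>t \<xi> \<eta> \<star> (T \<theta> (\<alpha> x y) \<star> (T \<theta> (\<kappa> (x + y) \<zeta>) \<star> (\<alpha>t \<theta> \<zeta> \<star> T (\<theta> + \<zeta>) (\<alpha> (x + y) z)))))"
    unfolding C3[where x=x and y=y and \<xi>=\<zeta>] by (simp add: Tm Ts Ss mmult_assoc canc U)
  also have "\<dots> = (T \<xi> (\<kappa> x \<eta>) \<star> \<alpha>t \<xi> \<eta> \<star> T (\<xi> + \<eta>) (\<alpha> x y)) \<star> (T (\<xi> + \<eta>) (\<kappa> (x + y) \<zeta>) \<star> \<alpha>t (\<xi> + \<eta>) \<zeta> \<star> T (\<xi> + \<eta> + \<zeta>) (\<alpha> (x + y) z))"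
    unfolding \<theta>_def by (simp add: mmult_assoc)
  finally show ?thesis by simp
qed


context
  fixes a :: "'g::lcsc_group \<Rightarrow> 'a::cstar_algebra \<Rightarrow> 'a"
    and \<alpha> :: "'g \<Rightarrow> 'g \<Rightarrow> 'a multiplier"
    and ta :: "'h::lcsc_group \<Rightarrow> 'a \<Rightarrow> 'a"
    and \<alpha>t :: "'h \<Rightarrow> 'h \<Rightarrow> 'a multiplier"
    and \<kappa> :: "'g \<Rightarrow> 'h \<Rightarrow> 'a multiplier"
  assumes cs: "covariant_structure a \<alpha> ta \<alpha>t \<kappa>"
begin

lemma ta_a: "twisted_action a \<alpha>" "twisted_action ta \<alpha>t"
  using cs by (simp_all add: covariant_structure_def measurable_twisted_action_def)

lemma cs_unitary: "unitary_mult (\<kappa> x \<xi>)"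
  and cs_k0: "\<kappa> 0 \<xi> = mone" "\<kappa> x 0 = mone"
  and C1: "a x \<circ> ta \<xi> = ad (\<kappa> x \<xi>) \<circ> ta \<xi> \<circ> a x"
  and C2: "aut_ext (a x) (\<alpha>t \<xi> \<eta>) =
        mmult (mmult (mmult (\<kappa> x \<xi>) (aut_ext (ta \<xi>) (\<kappa> x \<eta>))) (\<alpha>t \<xi> \<eta>)) (mstar (\<kappa> x (\<xi> + \<eta>)))"
  and C3: "aut_ext (ta \<xi>) (\<alpha> x y) =
        mmult (mmult (mmult (mstar (\<kappa> x \<xi>)) (aut_ext (a x) (mstar (\<kappa> y \<xi>)))) (\<alpha> x y)) (\<kappa> (x + y) \<xi>)"
  using cs unfolding covariant_structure_def by blast+

lemma aut_a: "aut (a x)" and aut_ta: "aut (ta \<xi>)"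
  using ta_a twisted_aut by blast+

lemma ST: "unitary_mult u \<Longrightarrow> aut_ext (a x) (aut_ext (ta \<eta>) u) = \<kappa> x \<eta> \<star> aut_ext (ta \<eta>) (aut_ext (a x) u) \<star> mstar (\<kappa> x \<eta>)"
proof -
  assume u: "unitary_mult u"
  have "aut_ext (a x) (aut_ext (ta \<eta>) u) = aut_ext (a x \<circ> ta \<eta>) u" by (simp add: aut_ext_comp aut_a aut_ta)
  also have "\<dots> = aut_ext (ad (\<kappa> x \<eta>) \<circ> (ta \<eta> \<circ> a x)) u" by (simp add: C1 comp_assoc)
  also have "\<dots> = aut_ext (ad (\<kappa> x \<eta>)) (aut_ext (ta \<eta> \<circ> a x) u)"
    by (intro aut_ext_comp_bij ad_bij cs_unitary aut_bij aut_comp aut_a aut_ta)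
  also have "\<dots> = \<kappa> x \<eta> \<star> aut_ext (ta \<eta> \<circ> a x) u \<star> mstar (\<kappa> x \<eta>)"
    by (intro aut_ext_ad cs_unitary aut_ext_multiplier aut_comp aut_a aut_ta unitary_mult_mult u)
  finally show ?thesis by (simp add: aut_ext_comp aut_a aut_ta)
qed

abbreviation "A \<equiv> prod_act a ta"
abbreviation "\<beta> \<equiv> prod_cocycle \<alpha> ta \<alpha>t \<kappa>"

lemma beta_unitary: "unitary_mult (\<beta> p q)"
  unfolding prod_cocycle_def
  by (intro unitary_mmult aut_ext_unitary aut_ta cs_unitary twisted_unitary[OF ta_a(1)] twisted_unitary[OF ta_a(2)])

lemma A_aut: "aut (A p)"
  unfolding prod_act_def by (intro aut_comp aut_a aut_ta)

lemma A_comp: "A p \<circ> A q = ad (\<beta> p q) \<circ> A (p + q)"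
proof -
  obtain x \<xi> where p: "p = (x, \<xi>)" by (cases p)
  obtain y \<eta> where q: "q = (y, \<eta>)" by (cases q)
  have mk: "is_multiplier (\<kappa> x \<eta>)" "is_multiplier (\<alpha>t \<xi> \<eta>)" "is_multiplier (\<alpha> x y)"
    using cs_unitary twisted_unitary ta_a unitary_mult_mult by blast+
  have "A p \<circ> A q = ta \<xi> \<circ> (a x \<circ> ta \<eta>) \<circ> a y" unfolding prod_act_def p q by (simp add: comp_assoc)
  also have "\<dots> = (ta \<xi> \<circ> ad (\<kappa> x \<eta>)) \<circ> ta \<eta> \<circ> (a x \<circ> a y)" unfolding C1 by (simp add: comp_assoc)
  also have "\<dots> = ad (aut_ext (ta \<xi>) (\<kappa> x \<eta>)) \<circ> (ta \<xi> \<circ> ta \<eta>) \<circ> (ad (\<alpha> x y) \<circ> a (x + y))"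
    using ta_a(1) by (simp add: aut_ad[OF aut_ta] twisted_action_def comp_assoc)
  also have "\<dots> = ad (aut_ext (ta \<xi>) (\<kappa> x \<eta>)) \<circ> ad (\<alpha>t \<xi> \<eta>) \<circ> (ta (\<xi> + \<eta>) \<circ> ad (\<alpha> x y)) \<circ> a (x + y)"
    using ta_a(2) by (simp add: twisted_action_def comp_assoc)
  also have "\<dots> = ad (aut_ext (ta \<xi>) (\<kappa> x \<eta>)) \<circ> ad (\<alpha>t \<xi> \<eta>) \<circ> ad (aut_ext (ta (\<xi> + \<eta>)) (\<alpha> x y)) \<circ> (ta (\<xi> + \<eta>) \<circ> a (x + y))"
    by (simp add: aut_ad[OF aut_ta] comp_assoc)
  also have "\<dots> = ad (\<beta> p q) \<circ> A (p + q)"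
    unfolding prod_cocycle_def prod_act_def p q
    by (simp add: ad_mmult is_multiplier_mmult aut_ext_multiplier aut_ta mk comp_assoc)
  finally show ?thesis .
qed

lemma beta_0: "\<beta> p 0 = mone" "\<beta> 0 p = mone"
  unfolding prod_cocycle_def
  using twisted_alpha0[OF ta_a(1)] twisted_alpha0[OF ta_a(2)] twisted_zero[OF ta_a(2)] cs_k0
  by (simp_all add: aut_ext_mone aut_ta)

lemma beta_cocycle: "\<beta> p q \<star> \<beta> (p + q) r = aut_ext (A p) (\<beta> q r) \<star> \<beta> p (q + r)"
proof -
  obtain x \<xi> where p: "p = (x, \<xi>)" by (cases p)
  obtain y \<eta> where q: "q = (y, \<eta>)" by (cases q)
  obtain z \<zeta> where r: "r = (z, \<zeta>)" by (cases r)
  have "aut_ext (A p) (\<beta> q r) = aut_ext (ta \<xi>) (aut_ext (a x) (\<beta> q r))"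
    unfolding prod_act_def p by (simp add: aut_ext_comp aut_a aut_ta)
  moreover have "(aut_ext (ta \<xi>) (\<kappa> x \<eta>) \<star> \<alpha>t \<xi> \<eta> \<star> aut_ext (ta (\<xi> + \<eta>)) (\<alpha> x y)) \<star> (aut_ext (ta (\<xi> + \<eta>)) (\<kappa> (x + y) \<zeta>) \<star> \<alpha>t (\<xi> + \<eta>) \<zeta> \<star> aut_ext (ta (\<xi> + \<eta> + \<zeta>)) (\<alpha> (x + y) z))
       = aut_ext (ta \<xi>) (aut_ext (a x) (aut_ext (ta \<eta>) (\<kappa> y \<zeta>) \<star> \<alpha>t \<eta> \<zeta> \<star> aut_ext (ta (\<eta> + \<zeta>)) (\<alpha> y z))) \<star> (aut_ext (ta \<xi>) (\<kappa> x (\<eta> + \<zeta>)) \<star> \<alpha>t \<xi> (\<eta> + \<zeta>) \<star> aut_ext (ta (\<xi> + (\<eta> + \<zeta>))) (\<alpha> x (y + z)))"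
  proof (rule cocycle_core[where T="\<lambda>\<xi>. aut_ext (ta \<xi>)" and S="\<lambda>x. aut_ext (a x)"])
    show "\<And>\<xi> m n. aut_ext (ta \<xi>) (m \<star> n) = aut_ext (ta \<xi>) m \<star> aut_ext (ta \<xi>) n" by (simp add: aut_ext_mmult aut_ta)
    show "\<And>\<xi> m. aut_ext (ta \<xi>) (mstar m) = mstar (aut_ext (ta \<xi>) m)" by (simp add: aut_ext_mstar aut_ta)
    show "\<And>x m n. aut_ext (a x) (m \<star> n) = aut_ext (a x) m \<star> aut_ext (a x) n" by (simp add: aut_ext_mmult aut_a)
    show "\<And>x m. aut_ext (a x) (mstar m) = mstar (aut_ext (a x) m)" by (simp add: aut_ext_mstar aut_a)
    show "\<And>x y. unitary_mult (\<alpha> x y)" using ta_a(1) by (rule twisted_unitary)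
    show "\<And>x y. unitary_mult (\<alpha>t x y)" using ta_a(2) by (rule twisted_unitary)
    show "\<And>x \<xi>. unitary_mult (\<kappa> x \<xi>)" by (rule cs_unitary)
    show "\<And>\<xi> u. unitary_mult u \<Longrightarrow> unitary_mult (aut_ext (ta \<xi>) u)" by (simp add: aut_ext_unitary aut_ta)
    show "\<And>x u. unitary_mult u \<Longrightarrow> unitary_mult (aut_ext (a x) u)" by (simp add: aut_ext_unitary aut_a)
    show "\<And>\<xi> \<eta> u. unitary_mult u \<Longrightarrow> aut_ext (ta \<xi>) (aut_ext (ta \<eta>) u) = \<alpha>t \<xi> \<eta> \<star> aut_ext (ta (\<xi> + \<eta>)) u \<star> mstar (\<alpha>t \<xi> \<eta>)"
      using ta_a(2) by (simp add: twisted_comp unitary_mult_mult)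
    show "\<And>x \<eta> u. unitary_mult u \<Longrightarrow> aut_ext (a x) (aut_ext (ta \<eta>) u) = \<kappa> x \<eta> \<star> aut_ext (ta \<eta>) (aut_ext (a x) u) \<star> mstar (\<kappa> x \<eta>)"
      by (rule ST)
    show "\<And>x \<xi> \<eta>. aut_ext (a x) (\<alpha>t \<xi> \<eta>) = \<kappa> x \<xi> \<star> aut_ext (ta \<xi>) (\<kappa> x \<eta>) \<star> \<alpha>t \<xi> \<eta> \<star> mstar (\<kappa> x (\<xi> + \<eta>))"
      by (rule C2)
    show "\<And>x y \<xi>. aut_ext (ta \<xi>) (\<alpha> x y) = mstar (\<kappa> x \<xi>) \<star> aut_ext (a x) (mstar (\<kappa> y \<xi>)) \<star> \<alpha> x y \<star> \<kappa> (x + y) \<xi>"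
      by (rule C3)
    show "\<And>x y z. \<alpha> x y \<star> \<alpha> (x + y) z = aut_ext (a x) (\<alpha> y z) \<star> \<alpha> x (y + z)"
      using ta_a(1) by (rule twisted_cocycle)
    show "\<And>\<xi> \<eta> \<zeta>. \<alpha>t \<xi> \<eta> \<star> \<alpha>t (\<xi> + \<eta>) \<zeta> = aut_ext (ta \<xi>) (\<alpha>t \<eta> \<zeta>) \<star> \<alpha>t \<xi> (\<eta> + \<zeta>)"
      using ta_a(2) by (rule twisted_cocycle)
  qed
  ultimately show ?thesis unfolding prod_cocycle_def p q r by simp
qed

lemma prod_twisted: "twisted_action A \<beta>"
  unfolding twisted_action_def
  using A_aut beta_unitary A_comp beta_0 beta_cocycle ta_a
  by (auto simp: is_aut_aut prod_act_def twisted_zero)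

end


definition nonexp :: "('x \<Rightarrow> 'a::metric_space \<Rightarrow> 'a) \<Rightarrow> bool" where
  "nonexp \<Phi> \<longleftrightarrow> (\<forall>p x y. dist (\<Phi> p x) (\<Phi> p y) \<le> dist x y)"

definition opm :: "'x measure \<Rightarrow> ('x \<Rightarrow> 'a::metric_space \<Rightarrow> 'a) \<Rightarrow> bool" where
  "opm M \<Phi> \<longleftrightarrow> (\<forall>B. (\<lambda>p. \<Phi> p B) \<in> borel_measurable M) \<and> nonexp \<Phi>"

definition opc :: "('x::topological_space \<Rightarrow> 'a::metric_space \<Rightarrow> 'a) \<Rightarrow> bool" where
  "opc \<Phi> \<longleftrightarrow> (\<forall>B. continuous_on UNIV (\<lambda>p. \<Phi> p B)) \<and> nonexp \<Phi>"

lemma carath: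
  fixes \<Phi> :: "'x \<Rightarrow> 'a::{metric_space, second_countable_topology} \<Rightarrow> 'a"
  assumes op: "opm M \<Phi>" and g: "g \<in> borel_measurable M"
  shows "(\<lambda>p. \<Phi> p (g p)) \<in> borel_measurable M"
proof -
  obtain D :: "'a set" where D: "countable D" "\<And>X. open X \<Longrightarrow> X \<noteq> {} \<Longrightarrow> \<exists>d\<in>D. d \<in> X"
    using countable_dense_setE by blast
  have Dne: "D \<noteq> {}" using D(2)[of UNIV] by auto
  define d where "d = from_nat_into D"
  have rd: "range d = D" unfolding d_def using Dne D(1) by simp
  have ex: "\<exists>i. dist x (d i) < 1 / real (Suc n)" for x n
  proof -
    obtain e where "e \<in> D" "e \<in> ball x (1 / real (Suc n))" using D(2)[of "ball x (1 / real (Suc n))"] by auto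
    then show ?thesis using rd by (auto simp: dist_commute)
  qed
  define h where "h n p = (LEAST i. dist (g p) (d i) < 1 / real (Suc n))" for n p
  have hm: "h n \<in> measurable M (count_space UNIV)" for n
    unfolding h_def by (rule measurable_Least) (use g in measurable)
  have hd: "dist (g p) (d (h n p)) < 1 / real (Suc n)" for n p
    unfolding h_def by (rule LeastI_ex[OF ex])
  have fm: "(\<lambda>p. \<Phi> p (d (h n p))) \<in> borel_measurable M" for n
  proof (rule measurable_compose_countable[where f="\<lambda>i p. \<Phi> p (d i)" and g="h n"])
    show "\<And>i. (\<lambda>p. \<Phi> p (d i)) \<in> borel_measurable M" using op by (simp add: opm_def)
    show "h n \<in> measurable M (count_space UNIV)" by (rule hm)
  qed
  show ?thesis
  proof (rule borel_measurable_LIMSEQ_metric[OF fm])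
    fix p
    show "(\<lambda>n. \<Phi> p (d (h n p))) \<longlonglongrightarrow> \<Phi> p (g p)"
    proof (rule tendsto_dist_iff[THEN iffD2], rule Lim_null_comparison)
      show "\<forall>\<^sub>F n in sequentially. norm (dist (\<Phi> p (d (h n p))) (\<Phi> p (g p))) \<le> 1 / real (Suc n)"
      proof (intro always_eventually allI)
        fix n
        have "dist (\<Phi> p (d (h n p))) (\<Phi> p (g p)) \<le> dist (d (h n p)) (g p)"
          using op by (simp add: opm_def nonexp_def)
        also have "\<dots> < 1 / real (Suc n)" using hd by (simp add: dist_commute)
        finally show "norm (dist (\<Phi> p (d (h n p))) (\<Phi> p (g p))) \<le> 1 / real (Suc n)" by simp
      qed
      show "(\<lambda>n. 1 / real (Suc n)) \<longlonglongrightarrow> 0" by (rule LIMSEQ_Suc[OF lim_const_over_n])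
    qed
  qed
qed

lemma nonexp_comp: "nonexp \<Phi> \<Longrightarrow> nonexp \<Psi> \<Longrightarrow> nonexp (\<lambda>p. \<Phi> p \<circ> \<Psi> p)"
  unfolding nonexp_def by (metis comp_apply order_trans)

lemma opm_comp:
  fixes \<Phi> :: "'x \<Rightarrow> 'a::{metric_space, second_countable_topology} \<Rightarrow> 'a"
  shows "opm M \<Phi> \<Longrightarrow> opm M \<Psi> \<Longrightarrow> opm M (\<lambda>p. \<Phi> p \<circ> \<Psi> p)"
  unfolding opm_def[of M "\<lambda>p. \<Phi> p \<circ> \<Psi> p"]
  by (auto intro: nonexp_comp carath simp: opm_def)

lemma opm_precomp:
  "opm N \<Phi> \<Longrightarrow> h \<in> measurable M N \<Longrightarrow> opm M (\<lambda>p. \<Phi> (h p))"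
  unfolding opm_def nonexp_def by (auto intro: measurable_compose)

lemma opm_const: "nonexp (\<lambda>p::'x. f) \<Longrightarrow> opm (M::'x measure) (\<lambda>p. f)"
  unfolding opm_def by simp

lemma cont_apply:
  fixes \<Phi> :: "'x::topological_space \<Rightarrow> 'a::metric_space \<Rightarrow> 'a"
  assumes op: "opc \<Phi>" and g: "continuous_on UNIV g"
  shows "continuous_on UNIV (\<lambda>p. \<Phi> p (g p))"
  unfolding continuous_on_def
proof (intro ballI)
  fix p0 :: 'x
  have c1: "((\<lambda>p. \<Phi> p (g p0)) \<longlongrightarrow> \<Phi> p0 (g p0)) (at p0)"
    using op unfolding opc_def continuous_on_def by auto
  have c2: "(g \<longlongrightarrow> g p0) (at p0)" using g unfolding continuous_on_def by auto
  show "((\<lambda>p. \<Phi> p (g p)) \<longlongrightarrow> \<Phi> p0 (g p0)) (at p0 within UNIV)"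
    unfolding tendsto_iff
  proof (intro allI impI)
    fix e :: real assume e: "e > 0"
    have "eventually (\<lambda>p. dist (\<Phi> p (g p0)) (\<Phi> p0 (g p0)) < e/2) (at p0)"
      using c1 e unfolding tendsto_iff by (meson half_gt_zero)
    moreover have "eventually (\<lambda>p. dist (g p) (g p0) < e/2) (at p0)"
      using c2 e unfolding tendsto_iff by (meson half_gt_zero)
    ultimately show "eventually (\<lambda>p. dist (\<Phi> p (g p)) (\<Phi> p0 (g p0)) < e) (at p0 within UNIV)"
    proof eventually_elim
      case (elim p)
      have "dist (\<Phi> p (g p)) (\<Phi> p0 (g p0)) \<le> dist (\<Phi> p (g p)) (\<Phi> p (g p0)) + dist (\<Phi> p (g p0)) (\<Phi> p0 (g p0))"
        by (rule dist_triangle)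
      also have "dist (\<Phi> p (g p)) (\<Phi> p (g p0)) \<le> dist (g p) (g p0)" using op by (simp add: opc_def nonexp_def)
      finally show ?case using elim by simp
    qed
  qed
qed

lemma opc_comp: "opc \<Phi> \<Longrightarrow> opc \<Psi> \<Longrightarrow> opc (\<lambda>p. \<Phi> p \<circ> \<Psi> p)"
  unfolding opc_def[of "\<lambda>p. \<Phi> p \<circ> \<Psi> p"]
  by (auto intro: nonexp_comp cont_apply simp: opc_def)

lemma opc_precomp:
  "opc \<Phi> \<Longrightarrow> continuous_on UNIV h \<Longrightarrow> opc (\<lambda>p. \<Phi> (h p))"
  unfolding opc_def nonexp_def
  by (auto intro: continuous_on_compose2[where t=UNIV])

lemma opc_const: "nonexp (\<lambda>p::'x::topological_space. f) \<Longrightarrow> opc (\<lambda>p::'x. f)"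
  unfolding opc_def by simp


lemma nonexp_aut: "(\<And>p. aut (f p)) \<Longrightarrow> nonexp f"
  unfolding nonexp_def using sh_lipschitz aut_sh by blast

lemma nonexp_inv_aut: "(\<And>p. aut (f p)) \<Longrightarrow> nonexp (\<lambda>p. inv (f p))"
  unfolding nonexp_def using sh_lipschitz aut_sh aut_inv by blast

lemma nonexp_L: "(\<And>p. unitary_mult (m p)) \<Longrightarrow> nonexp (\<lambda>p. fst (m p))"
  unfolding nonexp_def using unitary_L_lipschitz by blast

lemma nonexp_R: "(\<And>p. unitary_mult (m p)) \<Longrightarrow> nonexp (\<lambda>p. snd (m p))"
  unfolding nonexp_def using unitary_R_lipschitz by blast

lemma nonexp_cstar: "nonexp (\<lambda>p. cstar :: 'a::cstar_algebra \<Rightarrow> 'a)"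
  unfolding nonexp_def dist_norm by (simp add: cstar_diff[symmetric])

lemma inv_twisted:
  assumes t: "twisted_action ta \<alpha>t"
  shows "inv (ta \<theta>) = (\<lambda>x. ta (- \<theta>) (cstar (snd (\<alpha>t \<theta> (- \<theta>)) (cstar (snd (\<alpha>t \<theta> (- \<theta>)) x)))))"
proof
  fix x
  define u where "u = \<alpha>t \<theta> (- \<theta>)"
  have u: "unitary_mult u" unfolding u_def using t by (rule twisted_unitary)
  have adm: "ad (mstar u) x = cstar (snd u (cstar (snd u x)))"
    by (simp add: ad_def mstar_def cstar_cstar)
  have "ta \<theta> \<circ> ta (- \<theta>) = ad u \<circ> ta 0" using t unfolding u_def by (simp add: twisted_action_def)
  then have e: "ta \<theta> (ta (- \<theta>) y) = ad u y" for y using twisted_zero[OF t] by (metis comp_apply id_apply)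
  have "ta \<theta> (ta (- \<theta>) (ad (mstar u) x)) = x"
    unfolding e using ad_unitary_inv(1)[OF u] by (metis comp_apply id_apply)
  then have "inv (ta \<theta>) x = ta (- \<theta>) (ad (mstar u) x)"
    by (metis aut_inv_f twisted_aut[OF t])
  then show "inv (ta \<theta>) x = ta (- \<theta>) (cstar (snd (\<alpha>t \<theta> (- \<theta>)) (cstar (snd (\<alpha>t \<theta> (- \<theta>)) x))))"
    using adm unfolding u_def by simp
qed

lemma meas_cont:
  fixes f :: "'x::topological_space \<Rightarrow> 'y::topological_space"
  shows "continuous_on UNIV f \<Longrightarrow> f \<in> measurable borel borel"
  by (rule borel_measurable_continuous_onI)

context
  fixes a :: "'k::lcsc_group \<Rightarrow> 'a::cstar_algebra \<Rightarrow> 'a" and \<alpha> :: "'k \<Rightarrow> 'k \<Rightarrow> 'a multiplier"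
  assumes m: "measurable_twisted_action a \<alpha>"
begin

lemma mt: "twisted_action a \<alpha>" using m by (simp add: measurable_twisted_action_def)

lemma opm_act: "opm borel a"
  using m twisted_aut[OF mt] unfolding opm_def measurable_twisted_action_def strongly_measurable_def
  by (auto intro: nonexp_aut)

lemma opm_L: "opm borel (\<lambda>s. fst (\<alpha> (fst s) (snd s)))"
  using m twisted_unitary[OF mt] unfolding opm_def measurable_twisted_action_def strictly_measurable_def
  by (auto intro!: nonexp_L simp: case_prod_beta)

lemma opm_R: "opm borel (\<lambda>s. snd (\<alpha> (fst s) (snd s)))"
  using m twisted_unitary[OF mt] unfolding opm_def measurable_twisted_action_def strictly_measurable_def
  by (auto intro!: nonexp_R simp: case_prod_beta)

lemma opm_inv: "opm borel (\<lambda>\<theta>. inv (a \<theta>))"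
proof -
  have e: "(\<lambda>\<theta>. inv (a \<theta>)) = (\<lambda>\<theta>. a (- \<theta>) \<circ> ((\<lambda>_. cstar) \<theta> \<circ> (snd (\<alpha> \<theta> (- \<theta>)) \<circ> ((\<lambda>_. cstar) \<theta> \<circ> snd (\<alpha> \<theta> (- \<theta>))))))"
    by (rule ext) (simp add: inv_twisted[OF mt] comp_def)
  have mneg: "(\<lambda>\<theta>::'k. - \<theta>) \<in> measurable borel borel" by (intro meas_cont continuous_intros)
  have mpair: "(\<lambda>\<theta>::'k. (\<theta>, - \<theta>)) \<in> measurable borel borel" by (intro meas_cont continuous_intros)
  have R: "opm borel (\<lambda>\<theta>. snd (\<alpha> \<theta> (- \<theta>)))"
    using opm_precomp[OF opm_R mpair] by simp
  show ?thesis unfolding e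
    by (intro opm_comp opm_precomp[OF opm_act mneg] R opm_const nonexp_cstar)
qed

end


context
  fixes a :: "'k::lcsc_group \<Rightarrow> 'a::cstar_algebra \<Rightarrow> 'a" and \<alpha> :: "'k \<Rightarrow> 'k \<Rightarrow> 'a multiplier"
  assumes c: "continuous_twisted_action a \<alpha>"
begin

lemma ct: "twisted_action a \<alpha>" using c by (simp add: continuous_twisted_action_def)

lemma opc_act: "opc a"
  using c twisted_aut[OF ct] unfolding opc_def continuous_twisted_action_def strongly_continuous_def
  by (auto intro: nonexp_aut)

lemma opc_L: "opc (\<lambda>s. fst (\<alpha> (fst s) (snd s)))"
  using c twisted_unitary[OF ct] unfolding opc_def continuous_twisted_action_def strictly_continuous_def
  by (auto intro!: nonexp_L simp: case_prod_beta)

lemma opc_R: "opc (\<lambda>s. snd (\<alpha> (fst s) (snd s)))"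
  using c twisted_unitary[OF ct] unfolding opc_def continuous_twisted_action_def strictly_continuous_def
  by (auto intro!: nonexp_R simp: case_prod_beta)

lemma opc_inv: "opc (\<lambda>\<theta>. inv (a \<theta>))"
proof -
  have e: "(\<lambda>\<theta>. inv (a \<theta>)) = (\<lambda>\<theta>. a (- \<theta>) \<circ> ((\<lambda>_. cstar) \<theta> \<circ> (snd (\<alpha> \<theta> (- \<theta>)) \<circ> ((\<lambda>_. cstar) \<theta> \<circ> snd (\<alpha> \<theta> (- \<theta>))))))"
    by (rule ext) (simp add: inv_twisted[OF ct] comp_def)
  have mneg: "continuous_on UNIV (\<lambda>\<theta>::'k. - \<theta>)" by (intro continuous_intros)
  have mpair: "continuous_on UNIV (\<lambda>\<theta>::'k. (\<theta>, - \<theta>))" by (intro continuous_intros)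
  have R: "opc (\<lambda>\<theta>. snd (\<alpha> \<theta> (- \<theta>)))"
    using opc_precomp[OF opc_R mpair] by simp
  show ?thesis unfolding e
    by (intro opc_comp opc_precomp[OF opc_act mneg] R opc_const nonexp_cstar)
qed

end

lemma fst_aut_ext: "fst (aut_ext f m) = f \<circ> fst m \<circ> inv f"
  and snd_aut_ext: "snd (aut_ext f m) = f \<circ> snd m \<circ> inv f"
  by (simp_all add: aut_ext_def)

lemma fst_beta: "fst (prod_cocycle \<alpha> ta \<alpha>t \<kappa> p q) =
   fst (aut_ext (ta (snd p)) (\<kappa> (fst p) (snd q))) \<circ> (fst (\<alpha>t (snd p) (snd q)) \<circ> fst (aut_ext (ta (snd p + snd q)) (\<alpha> (fst p) (fst q))))"
  by (simp add: prod_cocycle_def mmult_def comp_assoc)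

lemma snd_beta: "snd (prod_cocycle \<alpha> ta \<alpha>t \<kappa> p q) =
   snd (aut_ext (ta (snd p + snd q)) (\<alpha> (fst p) (fst q))) \<circ> (snd (\<alpha>t (snd p) (snd q)) \<circ> snd (aut_ext (ta (snd p)) (\<kappa> (fst p) (snd q))))"
  by (simp add: prod_cocycle_def mmult_def comp_assoc)


context
  fixes a :: "'g::lcsc_group \<Rightarrow> 'a::cstar_algebra \<Rightarrow> 'a"
    and \<alpha> :: "'g \<Rightarrow> 'g \<Rightarrow> 'a multiplier"
    and ta :: "'h::lcsc_group \<Rightarrow> 'a \<Rightarrow> 'a"
    and \<alpha>t :: "'h \<Rightarrow> 'h \<Rightarrow> 'a multiplier"
    and \<kappa> :: "'g \<Rightarrow> 'h \<Rightarrow> 'a multiplier"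
  assumes cs: "covariant_structure a \<alpha> ta \<alpha>t \<kappa>"
begin

lemma ma: "measurable_twisted_action a \<alpha>" and mta: "measurable_twisted_action ta \<alpha>t"
  and kc: "strictly_continuous (\<lambda>(x, \<xi>). \<kappa> x \<xi>)"
  using cs by (simp_all add: covariant_structure_def)

lemma opc_kL: "opc (\<lambda>s. fst (\<kappa> (fst s) (snd s)))"
  using kc cs_unitary[OF cs] unfolding opc_def strictly_continuous_def
  by (auto intro!: nonexp_L simp: case_prod_beta)

lemma opc_kR: "opc (\<lambda>s. snd (\<kappa> (fst s) (snd s)))"
  using kc cs_unitary[OF cs] unfolding opc_def strictly_continuous_def
  by (auto intro!: nonexp_R simp: case_prod_beta)

lemma opm_kL: "opm borel (\<lambda>s. fst (\<kappa> (fst s) (snd s)))"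
  using opc_kL unfolding opc_def opm_def by (auto intro: meas_cont)

lemma opm_kR: "opm borel (\<lambda>s. snd (\<kappa> (fst s) (snd s)))"
  using opc_kR unfolding opc_def opm_def by (auto intro: meas_cont)

lemma opm_prod_act: "opm borel (prod_act a ta)"
proof -
  have 1: "opm borel (\<lambda>p::'g \<times> 'h. ta (snd p))"
    by (rule opm_precomp[OF opm_act[OF mta], of "\<lambda>p. snd p"]) (intro meas_cont continuous_intros)
  have 2: "opm borel (\<lambda>p::'g \<times> 'h. a (fst p))"
    by (rule opm_precomp[OF opm_act[OF ma], of "\<lambda>p. fst p"]) (intro meas_cont continuous_intros)
  show ?thesis unfolding prod_act_def using opm_comp[OF 1 2] by simp
qed

lemma opm_beta:
  "opm borel (\<lambda>t::('g \<times> 'h) \<times> ('g \<times> 'h). fst (prod_cocycle \<alpha> ta \<alpha>t \<kappa> (fst t) (snd t)))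
   \<and> opm borel (\<lambda>t::('g \<times> 'h) \<times> ('g \<times> 'h). snd (prod_cocycle \<alpha> ta \<alpha>t \<kappa> (fst t) (snd t)))"
proof -
  have t1: "opm borel (\<lambda>t::('g \<times> 'h) \<times> ('g \<times> 'h). ta (snd (fst t)))"
    by (rule opm_precomp[OF opm_act[OF mta], of "\<lambda>t. snd (fst t)"]) (intro meas_cont continuous_intros)
  have i1: "opm borel (\<lambda>t::('g \<times> 'h) \<times> ('g \<times> 'h). inv (ta (snd (fst t))))"
    by (rule opm_precomp[OF opm_inv[OF mta], of "\<lambda>t. snd (fst t)"]) (intro meas_cont continuous_intros)
  have t3: "opm borel (\<lambda>t::('g \<times> 'h) \<times> ('g \<times> 'h). ta (snd (fst t) + snd (snd t)))"
    by (rule opm_precomp[OF opm_act[OF mta], of "\<lambda>t. snd (fst t) + snd (snd t)"]) (intro meas_cont continuous_intros)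
  have i3: "opm borel (\<lambda>t::('g \<times> 'h) \<times> ('g \<times> 'h). inv (ta (snd (fst t) + snd (snd t))))"
    by (rule opm_precomp[OF opm_inv[OF mta], of "\<lambda>t. snd (fst t) + snd (snd t)"]) (intro meas_cont continuous_intros)
  have kL: "opm borel (\<lambda>t::('g \<times> 'h) \<times> ('g \<times> 'h). fst (\<kappa> (fst (fst t)) (snd (snd t))))"
    using opm_precomp[OF opm_kL meas_cont[of "\<lambda>t. (fst (fst t), snd (snd t))"]] by (simp add: continuous_intros)
  have kR: "opm borel (\<lambda>t::('g \<times> 'h) \<times> ('g \<times> 'h). snd (\<kappa> (fst (fst t)) (snd (snd t))))"
    using opm_precomp[OF opm_kR meas_cont[of "\<lambda>t. (fst (fst t), snd (snd t))"]] by (simp add: continuous_intros)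
  have atL: "opm borel (\<lambda>t::('g \<times> 'h) \<times> ('g \<times> 'h). fst (\<alpha>t (snd (fst t)) (snd (snd t))))"
    using opm_precomp[OF opm_L[OF mta] meas_cont[of "\<lambda>t. (snd (fst t), snd (snd t))"]] by (simp add: continuous_intros)
  have atR: "opm borel (\<lambda>t::('g \<times> 'h) \<times> ('g \<times> 'h). snd (\<alpha>t (snd (fst t)) (snd (snd t))))"
    using opm_precomp[OF opm_R[OF mta] meas_cont[of "\<lambda>t. (snd (fst t), snd (snd t))"]] by (simp add: continuous_intros)
  have aL: "opm borel (\<lambda>t::('g \<times> 'h) \<times> ('g \<times> 'h). fst (\<alpha> (fst (fst t)) (fst (snd t))))"
    using opm_precomp[OF opm_L[OF ma] meas_cont[of "\<lambda>t. (fst (fst t), fst (snd t))"]] by (simp add: continuous_intros)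
  have aR: "opm borel (\<lambda>t::('g \<times> 'h) \<times> ('g \<times> 'h). snd (\<alpha> (fst (fst t)) (fst (snd t))))"
    using opm_precomp[OF opm_R[OF ma] meas_cont[of "\<lambda>t. (fst (fst t), fst (snd t))"]] by (simp add: continuous_intros)
  show ?thesis
    unfolding fst_beta snd_beta fst_aut_ext snd_aut_ext
    by (intro conjI opm_comp t1 i1 t3 i3 kL kR atL atR aL aR)
qed

lemma measurable_part: "measurable_twisted_action (prod_act a ta) (prod_cocycle \<alpha> ta \<alpha>t \<kappa>)"
  unfolding measurable_twisted_action_def strongly_measurable_def strictly_measurable_def
proof (intro conjI allI)
  show "twisted_action (prod_act a ta) (prod_cocycle \<alpha> ta \<alpha>t \<kappa>)" by (rule prod_twisted[OF cs])
  show "(\<lambda>x. prod_act a ta x A) \<in> borel_measurable borel" for A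
    using opm_prod_act by (simp add: opm_def)
  show "(\<lambda>t. fst (case t of (x, y) \<Rightarrow> prod_cocycle \<alpha> ta \<alpha>t \<kappa> x y) A) \<in> borel_measurable borel" for A
    using opm_beta by (simp add: opm_def case_prod_beta)
  show "(\<lambda>t. snd (case t of (x, y) \<Rightarrow> prod_cocycle \<alpha> ta \<alpha>t \<kappa> x y) A) \<in> borel_measurable borel" for A
    using opm_beta by (simp add: opm_def case_prod_beta)
qed


lemma continuous_part:
  assumes ca: "continuous_twisted_action a \<alpha>" and cta: "continuous_twisted_action ta \<alpha>t"
  shows "continuous_twisted_action (prod_act a ta) (prod_cocycle \<alpha> ta \<alpha>t \<kappa>)"
proof -
  have pa: "opc (prod_act a ta)"
  proof -
    have 1: "opc (\<lambda>p::'g \<times> 'h. ta (snd p))"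
      by (rule opc_precomp[OF opc_act[OF cta], of "\<lambda>p. snd p"]) (intro continuous_intros)
    have 2: "opc (\<lambda>p::'g \<times> 'h. a (fst p))"
      by (rule opc_precomp[OF opc_act[OF ca], of "\<lambda>p. fst p"]) (intro continuous_intros)
    show ?thesis unfolding prod_act_def using opc_comp[OF 1 2] by simp
  qed
  have ob: "opc (\<lambda>t::('g \<times> 'h) \<times> ('g \<times> 'h). fst (prod_cocycle \<alpha> ta \<alpha>t \<kappa> (fst t) (snd t)))
   \<and> opc (\<lambda>t::('g \<times> 'h) \<times> ('g \<times> 'h). snd (prod_cocycle \<alpha> ta \<alpha>t \<kappa> (fst t) (snd t)))"
  proof -
    have t1: "opc (\<lambda>t::('g \<times> 'h) \<times> ('g \<times> 'h). ta (snd (fst t)))"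
      by (rule opc_precomp[OF opc_act[OF cta], of "\<lambda>t. snd (fst t)"]) (intro continuous_intros)
    have i1: "opc (\<lambda>t::('g \<times> 'h) \<times> ('g \<times> 'h). inv (ta (snd (fst t))))"
      by (rule opc_precomp[OF opc_inv[OF cta], of "\<lambda>t. snd (fst t)"]) (intro continuous_intros)
    have t3: "opc (\<lambda>t::('g \<times> 'h) \<times> ('g \<times> 'h). ta (snd (fst t) + snd (snd t)))"
      by (rule opc_precomp[OF opc_act[OF cta], of "\<lambda>t. snd (fst t) + snd (snd t)"]) (intro continuous_intros)
    have i3: "opc (\<lambda>t::('g \<times> 'h) \<times> ('g \<times> 'h). inv (ta (snd (fst t) + snd (snd t))))"
      by (rule opc_precomp[OF opc_inv[OF cta], of "\<lambda>t. snd (fst t) + snd (snd t)"]) (intro continuous_intros)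
    have c1: "continuous_on UNIV (\<lambda>t::('g \<times> 'h) \<times> ('g \<times> 'h). (fst (fst t), snd (snd t)))"
      "continuous_on UNIV (\<lambda>t::('g \<times> 'h) \<times> ('g \<times> 'h). (snd (fst t), snd (snd t)))"
      "continuous_on UNIV (\<lambda>t::('g \<times> 'h) \<times> ('g \<times> 'h). (fst (fst t), fst (snd t)))"
      by (intro continuous_intros)+
    have kL: "opc (\<lambda>t::('g \<times> 'h) \<times> ('g \<times> 'h). fst (\<kappa> (fst (fst t)) (snd (snd t))))"
      using opc_precomp[OF opc_kL c1(1)] by simp
    have kR: "opc (\<lambda>t::('g \<times> 'h) \<times> ('g \<times> 'h). snd (\<kappa> (fst (fst t)) (snd (snd t))))"
      using opc_precomp[OF opc_kR c1(1)] by simp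
    have atL: "opc (\<lambda>t::('g \<times> 'h) \<times> ('g \<times> 'h). fst (\<alpha>t (snd (fst t)) (snd (snd t))))"
      using opc_precomp[OF opc_L[OF cta] c1(2)] by simp
    have atR: "opc (\<lambda>t::('g \<times> 'h) \<times> ('g \<times> 'h). snd (\<alpha>t (snd (fst t)) (snd (snd t))))"
      using opc_precomp[OF opc_R[OF cta] c1(2)] by simp
    have aL: "opc (\<lambda>t::('g \<times> 'h) \<times> ('g \<times> 'h). fst (\<alpha> (fst (fst t)) (fst (snd t))))"
      using opc_precomp[OF opc_L[OF ca] c1(3)] by simp
    have aR: "opc (\<lambda>t::('g \<times> 'h) \<times> ('g \<times> 'h). snd (\<alpha> (fst (fst t)) (fst (snd t))))"
      using opc_precomp[OF opc_R[OF ca] c1(3)] by simp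
    show ?thesis
      unfolding fst_beta snd_beta fst_aut_ext snd_aut_ext
      by (intro conjI opc_comp t1 i1 t3 i3 kL kR atL atR aL aR)
  qed
  show ?thesis
    unfolding continuous_twisted_action_def strongly_continuous_def strictly_continuous_def
  proof (intro conjI allI)
    show "twisted_action (prod_act a ta) (prod_cocycle \<alpha> ta \<alpha>t \<kappa>)" by (rule prod_twisted[OF cs])
    show "continuous_on UNIV (\<lambda>x. prod_act a ta x A)" for A
      using pa by (simp add: opc_def)
    show "continuous_on UNIV (\<lambda>t. fst (case t of (x, y) \<Rightarrow> prod_cocycle \<alpha> ta \<alpha>t \<kappa> x y) A)" for A
      using ob by (simp add: opc_def case_prod_beta)
    show "continuous_on UNIV (\<lambda>t. snd (case t of (x, y) \<Rightarrow> prod_cocycle \<alpha> ta \<alpha>t \<kappa> x y) A)" for A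
      using ob by (simp add: opc_def case_prod_beta)
  qed
qed

end

theorem proposition3p1:
  fixes a :: "'g::lcsc_group \<Rightarrow> 'a::cstar_algebra \<Rightarrow> 'a"
    and \<alpha> :: "'g \<Rightarrow> 'g \<Rightarrow> 'a multiplier"
    and ta :: "'h::lcsc_group \<Rightarrow> 'a \<Rightarrow> 'a"
    and \<alpha>t :: "'h \<Rightarrow> 'h \<Rightarrow> 'a multiplier"
    and \<kappa> :: "'g \<Rightarrow> 'h \<Rightarrow> 'a multiplier"
  assumes "covariant_structure a \<alpha> ta \<alpha>t \<kappa>"
  shows "measurable_twisted_action (prod_act a ta) (prod_cocycle \<alpha> ta \<alpha>t \<kappa>)
         \<and> (continuous_twisted_action a \<alpha> \<and> continuous_twisted_action ta \<alpha>t
            \<longrightarrow> continuous_twisted_action (prod_act a ta) (prod_cocycle \<alpha> ta \<alpha>t \<kappa>))"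
  using measurable_part[OF assms] continuous_part[OF assms] by blast


end
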